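(* Let $R$ be a discrete $\Gamma$-ring. For every multiplicative map $\phi:H\mathbb Z\to R$, the element $\phi((1,-1))\in R[2]$, where $(1,-1)\in H\mathbb Z[2]$, is a formal difference law in $R$. The assignment $\phi\mapsto\phi((1,-1))$ is a bijection from the set of multiplicative maps $H\mathbb Z\to R$ to the set of formal difference laws in $R$, with inverse given by sending a formal difference law $r$ to the unique multiplicative map with $\pm1_n\mapsto r^n$ for all $n$.
   Context: Let $[n]=\{0,1,\dots,n\}$, pointed at $0$. A $\Gamma$-space is a functor $F$ from the finite pointed sets $[n]$ (with pointed maps) to pointed simplicial sets with $F[0]$ a point; for a pointed map $f$ we write $f$ also for $F(f)$; $\Sigma_n$ acts on $F[n]$ via permutations of $\{1,\dots,n\}$. We identify $[n]\wedge[m]$ with $[nm]$ via $i\wedge j\mapsto (j-1)n+i$. A $\Gamma$-ring is a $\Gamma$-space $R$ with unit $1\in R[1]$ (image of the unit map $\eta$) and associative unital multiplication given by natural maps $R(K)\wedge R(L)\to R(K\wedge L)$, $p\wedge q\mapsto pq$; it is discrete if all $R(K)$ are sets; $0\in R[1]$ denotes the basepoint. For $x\in R[2]$, $x^k\in R[2^k]$ is the $k$-fold product. A multiplicative map of $\Gamma$-rings is a natural transformation preserving units and products. Maps: $p^n_i:[n]\to[n-1]$, $p^n_i(j)=j$ ($j<i$), $p^n_i(i)=0$, $p^n_i(j)=j-1$ ($j>i$); for $1\le i<j\le n$ and $1\le k\le n-1$, $s^n_{i,j,k}:[n]\to[n-1]$ sends $0\mapsto0$, $i,j\mapsto k$,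 and the remaining elements order-preservingly and bijectively onto $\{1,\dots,n-1\}\setminus\{k\}$; $d^n_j:[n-1]\to[n]$ is the order-preserving injection missing $j$. $H\mathbb{Z}$ is the $\Gamma$-ring with $H\mathbb{Z}(K)$ the reduced free abelian group on $K$, pointed maps acting by summing coefficients along fibres, unit the inclusion of generators, multiplication $(\sum a_k k)(\sum b_l l)=\sum a_kb_l (k\wedge l)$; $\pm1_n=(1,-1)^n\in H\mathbb{Z}[2^n]$. For $k\ge1$, split $\{1,\dots,2^k\}=A_+\sqcup A_-$ where $i\in A_+$ iff the binary expansion of $i-1$ has an even number of digits $1$. The special action of $\Sigma_{2^{k-1}}\times\Sigma_{2^{k-1}}$ on $F[2^k]$ is the action of the group of permutations of $\{1,\dots,2^k\}$ preserving $A_+$ and $A_-$. Let $\sigma$ be the nontrivial element of $\Sigma_2$. A formal difference law in $R$ is $r\in R[2]$ such that: (1) $p^2_2(r)=1$ and $s^2_{1,2,1}(r)=0$; (2) $p^2_1(r)\,r=r\,p^2_1(r)=\sigma(r)$ in $R[2]$; (3) for every $k\ge1$, $r^k$ is fixed under the special action; (4) for every $k\ge1$, all $1\le i<j\le 2^k$ with one of $i,j$ in $A_+$ and the other in $A_-$, and all $1\le l\le 2^k-1$: $s^{2^k}_{i,j,l}(r^k)=d^{2^k-1}_l\,p^{2^k-1}_i\,p^{2^k}_j(r^k)$. *)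

theory Defs
  imports "HOL-Combinatorics.Permutations"
begin

text \<open>Discrete Gamma-rings, on the skeleton of finite pointed sets [n] = {0,...,n}.
  A pointed map [n] -> [m] is a function f :: nat => nat with f 0 = 0 and
  f i <= m for i <= n (only its values on {0..n} matter).
  R[n] is the set gobj R n, with basepoint gbp R n; the action of f is gact R n m f;
  the product R[n] /\ R[m] -> R[n*m] is gmult R n m; the unit is gunit R.\<close>

record 'a gamma_ring =
  gobj  :: "nat \<Rightarrow> 'a set"
  gbp   :: "nat \<Rightarrow> 'a"
  gact  :: "nat \<Rightarrow> nat \<Rightarrow> (nat \<Rightarrow> nat) \<Rightarrow> 'a \<Rightarrow> 'a"
  gmult :: "nat \<Rightarrow> nat \<Rightarrow> 'a \<Rightarrow> 'a \<Rightarrow> 'a"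
  gunit :: "'a"

definition pmap :: "nat \<Rightarrow> nat \<Rightarrow> (nat \<Rightarrow> nat) \<Rightarrow> bool" where
  "pmap n m f \<longleftrightarrow> f 0 = 0 \<and> (\<forall>i\<le>n. f i \<le> m)"

text \<open>Smash product f /\ g : [n]/\[m] -> [n']/\[m'] under the identification
  [n]/\[m] = [nm], i /\ j |-> (j-1)n + i.\<close>
definition smash_map :: "nat \<Rightarrow> nat \<Rightarrow> (nat \<Rightarrow> nat) \<Rightarrow> (nat \<Rightarrow> nat) \<Rightarrow> nat \<Rightarrow> nat" where
  "smash_map n n' f g k =
     (if k = 0 then 0 else
      (let i = (k - 1) mod n + 1; j = (k - 1) div n + 1 in
       if f i = 0 \<or> g j = 0 then 0 else (g j - 1) * n' + f i))"

definition is_gamma_ring :: "'a gamma_ring \<Rightarrow> bool" where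
  "is_gamma_ring R \<longleftrightarrow>
     (\<forall>n. gbp R n \<in> gobj R n) \<and>
     gobj R 0 = {gbp R 0} \<and>
     (\<forall>n m f x. pmap n m f \<and> x \<in> gobj R n \<longrightarrow> gact R n m f x \<in> gobj R m) \<and>
     (\<forall>n m f. pmap n m f \<longrightarrow> gact R n m f (gbp R n) = gbp R m) \<and>
     (\<forall>n m f g x. pmap n m f \<and> (\<forall>i\<le>n. f i = g i) \<and> x \<in> gobj R n
        \<longrightarrow> gact R n m f x = gact R n m g x) \<and>
     (\<forall>n x. x \<in> gobj R n \<longrightarrow> gact R n n (\<lambda>i. i) x = x) \<and>
     (\<forall>n m k f g x. pmap n m f \<and> pmap m k g \<and> x \<in> gobj R n
        \<longrightarrow> gact R m k g (gact R n m f x) = gact R n k (g \<circ> f) x) \<and>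
     gunit R \<in> gobj R 1 \<and>
     (\<forall>n m x y. x \<in> gobj R n \<and> y \<in> gobj R m \<longrightarrow> gmult R n m x y \<in> gobj R (n * m)) \<and>
     (\<forall>n m y. y \<in> gobj R m \<longrightarrow> gmult R n m (gbp R n) y = gbp R (n * m)) \<and>
     (\<forall>n m x. x \<in> gobj R n \<longrightarrow> gmult R n m x (gbp R m) = gbp R (n * m)) \<and>
     (\<forall>n n' m m' f g x y. pmap n n' f \<and> pmap m m' g \<and> x \<in> gobj R n \<and> y \<in> gobj R m
        \<longrightarrow> gmult R n' m' (gact R n n' f x) (gact R m m' g y)
            = gact R (n * m) (n' * m') (smash_map n n' f g) (gmult R n m x y)) \<and>
     (\<forall>n m k x y z. x \<in> gobj R n \<and> y \<in> gobj R m \<and> z \<in> gobj R k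
        \<longrightarrow> gmult R (n * m) k (gmult R n m x y) z = gmult R n (m * k) x (gmult R m k y z)) \<and>
     (\<forall>n x. x \<in> gobj R n \<longrightarrow> gmult R 1 n (gunit R) x = x \<and> gmult R n 1 x (gunit R) = x)"

text \<open>Multiplicative maps (natural, pointed, unital, multiplicative), extensional:
  undefined outside the carriers.\<close>
definition mult_maps :: "'a gamma_ring \<Rightarrow> 'b gamma_ring \<Rightarrow> (nat \<Rightarrow> 'a \<Rightarrow> 'b) set" where
  "mult_maps R S = {\<phi>.
     (\<forall>n x. x \<in> gobj R n \<longrightarrow> \<phi> n x \<in> gobj S n) \<and>
     (\<forall>n x. x \<notin> gobj R n \<longrightarrow> \<phi> n x = undefined) \<and>
     (\<forall>n. \<phi> n (gbp R n) = gbp S n) \<and>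
     (\<forall>n m f x. pmap n m f \<and> x \<in> gobj R n \<longrightarrow> \<phi> m (gact R n m f x) = gact S n m f (\<phi> n x)) \<and>
     \<phi> 1 (gunit R) = gunit S \<and>
     (\<forall>n m x y. x \<in> gobj R n \<and> y \<in> gobj R m
        \<longrightarrow> \<phi> (n * m) (gmult R n m x y) = gmult S n m (\<phi> n x) (\<phi> m y))}"

definition HZ :: "(nat \<Rightarrow> int) gamma_ring" where
  "HZ = \<lparr> gobj = (\<lambda>n. {a. \<forall>i. (i = 0 \<or> n < i) \<longrightarrow> a i = 0}),
          gbp = (\<lambda>n. (\<lambda>_. 0)),
          gact = (\<lambda>n m f a. (\<lambda>k. if k = 0 \<or> m < k then 0
                                 else (\<Sum>i\<in>{i\<in>{1..n}. f i = k}. a i))),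
          gmult = (\<lambda>n m a b. (\<lambda>k. if k = 0 \<or> n * m < k then 0
                                 else a ((k - 1) mod n + 1) * b ((k - 1) div n + 1))),
          gunit = (\<lambda>k. if k = 1 then 1 else 0) \<rparr>"

definition pm1 :: "nat \<Rightarrow> int" where
  "pm1 = (\<lambda>k. if k = 1 then 1 else if k = 2 then -1 else 0)"

fun gpow :: "'a gamma_ring \<Rightarrow> 'a \<Rightarrow> nat \<Rightarrow> 'a" where
  "gpow R x 0 = gunit R"
| "gpow R x (Suc k) = gmult R (2 ^ k) 2 (gpow R x k) x"

definition p_map :: "nat \<Rightarrow> nat \<Rightarrow> nat \<Rightarrow> nat" where
  "p_map n i x = (if x < i then x else if x = i then 0 else x - 1)"

definition s_map :: "nat \<Rightarrow> nat \<Rightarrow> nat \<Rightarrow> nat \<Rightarrow> nat \<Rightarrow> nat" where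
  "s_map n i j k x =
     (if x = 0 then 0 else if x = i \<or> x = j then k else
      (let r = x - (if i < x then 1 else 0) - (if j < x then 1 else 0)
       in if r < k then r else r + 1))"

definition d_map :: "nat \<Rightarrow> nat \<Rightarrow> nat \<Rightarrow> nat" where
  "d_map n j x = (if x = 0 then 0 else if x < j then x else x + 1)"

definition swap12 :: "nat \<Rightarrow> nat" where
  "swap12 x = (if x = 1 then 2 else if x = 2 then 1 else x)"

fun bitcount :: "nat \<Rightarrow> nat" where
  "bitcount n = (if n = 0 then 0 else n mod 2 + bitcount (n div 2))"

definition Aplus :: "nat \<Rightarrow> nat set" where
  "Aplus k = {i \<in> {1..2 ^ k}. even (bitcount (i - 1))}"

definition Aminus :: "nat \<Rightarrow> nat set" where
  "Aminus k = {1..2 ^ k} - Aplus k"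

definition formal_difference_law :: "'a gamma_ring \<Rightarrow> 'a \<Rightarrow> bool" where
  "formal_difference_law R r \<longleftrightarrow>
     r \<in> gobj R 2 \<and>
     gact R 2 1 (p_map 2 2) r = gunit R \<and>
     gact R 2 1 (s_map 2 1 2 1) r = gbp R 1 \<and>
     gmult R 1 2 (gact R 2 1 (p_map 2 1) r) r = gact R 2 2 swap12 r \<and>
     gmult R 2 1 r (gact R 2 1 (p_map 2 1) r) = gact R 2 2 swap12 r \<and>
     (\<forall>k\<ge>1. \<forall>\<pi>. \<pi> permutes {1..2 ^ k} \<and> \<pi> ` Aplus k \<subseteq> Aplus k \<and> \<pi> ` Aminus k \<subseteq> Aminus k
        \<longrightarrow> gact R (2 ^ k) (2 ^ k) \<pi> (gpow R r k) = gpow R r k) \<and>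
     (\<forall>k\<ge>1. \<forall>i j l. 1 \<le> i \<and> i < j \<and> j \<le> 2 ^ k \<and>
        ((i \<in> Aplus k \<and> j \<in> Aminus k) \<or> (i \<in> Aminus k \<and> j \<in> Aplus k)) \<and>
        1 \<le> l \<and> l \<le> 2 ^ k - 1
        \<longrightarrow> gact R (2 ^ k) (2 ^ k - 1) (s_map (2 ^ k) i j l) (gpow R r k)
            = gact R (2 ^ k - 2) (2 ^ k - 1) (d_map (2 ^ k - 1) l)
                (gact R (2 ^ k - 1) (2 ^ k - 2) (p_map (2 ^ k - 1) i)
                  (gact R (2 ^ k) (2 ^ k - 1) (p_map (2 ^ k) j) (gpow R r k))))"

end

theory Submission
  imports Defs
begin

lemma HZ_simps:
  "gobj HZ n = {a. \<forall>i. (i = 0 \<or> n < i) \<longrightarrow> a i = 0}"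
  "gbp HZ n = (\<lambda>_. 0)"
  "gact HZ n m f a = (\<lambda>k. if k = 0 \<or> m < k then 0 else (\<Sum>i\<in>{i\<in>{1..n}. f i = k}. a i))"
  "gmult HZ n m a b = (\<lambda>k. if k = 0 \<or> n * m < k then 0
                                 else a ((k - 1) mod n + 1) * b ((k - 1) div n + 1))"
  "gunit HZ = (\<lambda>k. if k = 1 then 1 else 0)"
  by (simp_all add: HZ_def)

lemma HZ_comp:
  assumes "pmap n m f" "pmap m k g"
  shows "gact HZ m k g (gact HZ n m f a) = gact HZ n k (g \<circ> f) a"
proof
  fix t
  show "gact HZ m k g (gact HZ n m f a) t = gact HZ n k (g \<circ> f) a t"
  proof (cases "t = 0 \<or> k < t")
    case True then show ?thesis by (simp add: HZ_simps)
  next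
    case False
    have S: "{i \<in> {1..n}. (g \<circ> f) i = t} = {i \<in> {1..n}. g (f i) = t}" by simp
    have "(\<Sum>j\<in>{j\<in>{1..m}. g j = t}. (\<Sum>i\<in>{x \<in> {i \<in> {1..n}. g (f i) = t}. f x = j}. a i))
          = (\<Sum>i\<in>{i \<in> {1..n}. g (f i) = t}. a i)"
    proof (rule sum.group)
      show "f ` {i \<in> {1..n}. g (f i) = t} \<subseteq> {j \<in> {1..m}. g j = t}"
      proof
        fix j assume "j \<in> f ` {i \<in> {1..n}. g (f i) = t}"
        then obtain x where x: "x \<in> {1..n}" "g (f x) = t" "j = f x" by auto
        then have "f x \<le> m" using assms unfolding pmap_def by auto
        moreover have "f x \<noteq> 0" using x False assms unfolding pmap_def by (metis gr_zeroI)
        ultimately show "j \<in> {j \<in> {1..m}. g j = t}" using x by auto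
      qed
    qed auto
    moreover have "\<And>j. j \<in> {j\<in>{1..m}. g j = t} \<Longrightarrow>
        {x \<in> {i \<in> {1..n}. g (f i) = t}. f x = j} = {i\<in>{1..n}. f i = j}" by auto
    ultimately show ?thesis using False by (simp add: HZ_simps)
  qed
qed

lemma divmod_repr:
  fixes N a b k :: nat
  assumes "0 < N" "1 \<le> a" "a \<le> N" "1 \<le> b"
  shows "((b-1)*N + a = k) = (1 \<le> k \<and> a = (k-1) mod N + 1 \<and> b = (k-1) div N + 1)"
proof
  assume h: "(b-1)*N + a = k"
  then have km: "k - 1 = (a-1) + (b-1)*N" using assms by auto
  have a1: "a - 1 < N" using assms by auto
  have "(k-1) mod N = a - 1" using km a1 by simp
  moreover have "(k-1) div N = b - 1" using km a1 by simp
  ultimately show "1 \<le> k \<and> a = (k-1) mod N + 1 \<and> b = (k-1) div N + 1"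
    using assms h by auto
next
  assume h: "1 \<le> k \<and> a = (k-1) mod N + 1 \<and> b = (k-1) div N + 1"
  then have "k - 1 = (b-1)*N + (a-1)" by (simp add: mult.commute)
  then show "(b-1)*N + a = k" using h assms by auto
qed

lemma HZ_smash:
  assumes f: "pmap n n' f" and g: "pmap m m' g"
  shows "gmult HZ n' m' (gact HZ n n' f x) (gact HZ m m' g y)
            = gact HZ (n * m) (n' * m') (smash_map n n' f g) (gmult HZ n m x y)"
proof
  fix k
  show "gmult HZ n' m' (gact HZ n n' f x) (gact HZ m m' g y) k
            = gact HZ (n * m) (n' * m') (smash_map n n' f g) (gmult HZ n m x y) k"
  proof (cases "k = 0 \<or> n' * m' < k")
    case True then show ?thesis by (simp add: HZ_simps)
  next
    case False
    then have k1: "1 \<le> k" and kle: "k \<le> n' * m'" by auto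
    have "n' * m' \<noteq> 0" using k1 kle by linarith
    then have n'0: "0 < n'" and m'0: "0 < m'" by auto
    define i' where "i' = (k - 1) mod n' + 1"
    define j' where "j' = (k - 1) div n' + 1"
    have i'r: "1 \<le> i'" "i' \<le> n'" using n'0 by (auto simp: i'_def Suc_leI)
    have "k - 1 < m' * n'" using kle k1 by (simp add: mult.commute)
    then have "(k - 1) div n' < m'" by (rule less_mult_imp_div_less)
    then have j'r: "1 \<le> j'" "j' \<le> m'" by (auto simp: j'_def)
    define I where "I = {i\<in>{1..n}. f i = i'}"
    define J where "J = {j\<in>{1..m}. g j = j'}"
    define Z where "Z = {z\<in>{1..n*m}. smash_map n n' f g z = k}"
    have L: "gmult HZ n' m' (gact HZ n n' f x) (gact HZ m m' g y) k
          = (\<Sum>i\<in>I. x i) * (\<Sum>j\<in>J. y j)"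
      using False i'r j'r by (simp add: HZ_simps I_def J_def i'_def j'_def)
    have Rr: "gact HZ (n * m) (n' * m') (smash_map n n' f g) (gmult HZ n m x y) k
          = (\<Sum>z\<in>Z. x ((z - 1) mod n + 1) * y ((z - 1) div n + 1))"
      using False by (auto simp: HZ_simps Z_def intro!: sum.cong)
    show ?thesis
    proof (cases "n = 0")
      case True
      then show ?thesis using L Rr by (simp add: I_def Z_def)
    next
      case False
      then have n0: "0 < n" by simp
      define \<pi> where "\<pi> = (\<lambda>z::nat. ((z - 1) mod n + 1, (z - 1) div n + 1))"
      have inj: "inj_on \<pi> Z"
      proof (rule inj_onI)
        fix z1 z2 assume "z1 \<in> Z" "z2 \<in> Z" "\<pi> z1 = \<pi> z2"
        then have "z1 - 1 = z2 - 1" "1 \<le> z1" "1 \<le> z2" unfolding \<pi>_def Z_def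
          by (auto, metis div_mod_decomp)
        then show "z1 = z2" by simp
      qed
      have img: "\<pi> ` Z = I \<times> J"
      proof
        show "\<pi> ` Z \<subseteq> I \<times> J"
        proof
          fix p assume "p \<in> \<pi> ` Z"
          then obtain z where z: "z \<in> Z" "p = \<pi> z" by auto
          define i where "i = (z - 1) mod n + 1"
          define j where "j = (z - 1) div n + 1"
          have zr: "1 \<le> z" "z \<le> n * m" "smash_map n n' f g z = k" using z by (auto simp: Z_def)
          have ir: "1 \<le> i" "i \<le> n" using n0 by (auto simp: i_def Suc_leI)
          have "z - 1 < m * n" using zr by (simp add: mult.commute)
          then have "(z - 1) div n < m" by (rule less_mult_imp_div_less)
          then have jr: "1 \<le> j" "j \<le> m" by (auto simp: j_def)
          have "smash_map n n' f g z = (if f i = 0 \<or> g j = 0 then 0 else (g j - 1) * n' + f i)"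
            using zr(1) unfolding smash_map_def i_def j_def Let_def by simp
          then have sm: "(if f i = 0 \<or> g j = 0 then 0 else (g j - 1) * n' + f i) = k"
            using zr(3) by simp
          have nz': "f i \<noteq> 0 \<and> g j \<noteq> 0"
          proof (rule ccontr)
            assume "\<not> (f i \<noteq> 0 \<and> g j \<noteq> 0)"
            then have "k = 0" using sm by argo
            then show False using k1 by simp
          qed
          then have nz: "f i \<noteq> 0" "g j \<noteq> 0" by auto
          have eq: "(g j - 1) * n' + f i = k" using sm nz' by argo
          have "f i \<le> n'" "g j \<le> m'" using f g ir jr unfolding pmap_def by auto
          moreover have "1 \<le> f i" "1 \<le> g j" using nz by auto
          ultimately have "f i = (k-1) mod n' + 1 \<and> g j = (k-1) div n' + 1"
            using divmod_repr[OF n'0, of "f i" "g j" k] eq by blast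
          then have "f i = i' \<and> g j = j'" unfolding i'_def j'_def by blast
          then show "p \<in> I \<times> J" using z ir jr by (auto simp: I_def J_def \<pi>_def i_def j_def)
        qed
      next
        show "I \<times> J \<subseteq> \<pi> ` Z"
        proof
          fix p assume "p \<in> I \<times> J"
          then obtain i j where p: "p = (i, j)" "i \<in> I" "j \<in> J" by auto
          then have ir: "1 \<le> i" "i \<le> n" "f i = i'" and jr: "1 \<le> j" "j \<le> m" "g j = j'"
            by (auto simp: I_def J_def)
          define z where "z = (j - 1) * n + i"
          have zm1: "z - 1 = (i - 1) + (j - 1) * n" using ir by (simp add: z_def)
          have i1: "i - 1 < n" using ir by simp
          have "(z - 1) mod n = i - 1" using zm1 i1 by simp
          then have imod: "(z - 1) mod n + 1 = i" using ir by simp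
          have "(z - 1) div n = j - 1" using zm1 i1 by simp
          then have jdiv: "(z - 1) div n + 1 = j" using jr by simp
          have z1: "1 \<le> z" using ir by (simp add: z_def)
          have "(j - 1) * n + i \<le> (j - 1) * n + n" using ir by simp
          also have "\<dots> = j * n" using jr by (cases j) auto
          also have "\<dots> \<le> m * n" using jr by simp
          finally have z2: "z \<le> n * m" by (simp add: z_def mult.commute)
          have "(j' - 1) * n' + i' = (k-1) div n' * n' + (k-1) mod n' + 1"
            unfolding i'_def j'_def by simp
          also have "\<dots> = k" using k1 by simp
          finally have kk: "(j' - 1) * n' + i' = k" .
          have "smash_map n n' f g z = (if f i = 0 \<or> g j = 0 then 0 else (g j - 1) * n' + f i)"
            using z1 imod jdiv unfolding smash_map_def Let_def by simp
          then have "smash_map n n' f g z = k" using kk ir(3) jr(3) i'r j'r by simp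
          then have "z \<in> Z" using z1 z2 by (simp add: Z_def)
          moreover have "\<pi> z = p" using imod jdiv p by (simp add: \<pi>_def)
          ultimately show "p \<in> \<pi> ` Z" by blast
        qed
      qed
      have "(\<Sum>z\<in>Z. x ((z - 1) mod n + 1) * y ((z - 1) div n + 1))
            = (\<Sum>p\<in>\<pi> ` Z. x (fst p) * y (snd p))"
        by (subst sum.reindex[OF inj]) (simp add: \<pi>_def)
      also have "\<dots> = (\<Sum>p\<in>I \<times> J. x (fst p) * y (snd p))" using img by simp
      also have "\<dots> = (\<Sum>i\<in>I. x i) * (\<Sum>j\<in>J. y j)"
        by (simp add: sum_product sum.cartesian_product split_def)
      finally show ?thesis using L Rr by simp
    qed
  qed
qed

lemma HZ_assoc:
  "gmult HZ (n * m) k (gmult HZ n m x y) z = gmult HZ n (m * k) x (gmult HZ m k y z)"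
proof
  fix t
  show "gmult HZ (n * m) k (gmult HZ n m x y) z t = gmult HZ n (m * k) x (gmult HZ m k y z) t"
  proof (cases "t = 0 \<or> n * m * k < t")
    case True then show ?thesis by (auto simp: HZ_simps mult.assoc)
  next
    case False
    then have t1: "1 \<le> t" and tle: "t \<le> n * m * k" by auto
    have "n * m * k \<noteq> 0" using t1 tle by linarith
    then have n0: "0 < n" and m0: "0 < m" and k0: "0 < k" by auto
    define a where "a = t - 1"
    have a: "a < n * m * k" using t1 tle by (simp add: a_def)
    have u: "a mod (n * m) < n * m" using n0 m0 by simp
    have v: "a div n < m * k" using a by (metis less_mult_imp_div_less mult.assoc mult.commute)
    have e1: "a mod (n * m) mod n = a mod n" by (simp add: mod_mod_cancel)
    have e2: "a mod (n * m) div n = a div n mod m" using n0 by (simp add: mod_mult2_eq)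
    have e3: "a div (n * m) = a div n div m" by (simp add: div_mult2_eq)
    have L: "gmult HZ (n * m) k (gmult HZ n m x y) z t
       = x (a mod n + 1) * y (a div n mod m + 1) * z (a div n div m + 1)"
      using False u e1 e2 e3 by (simp add: HZ_simps a_def Suc_le_eq)
    have R: "gmult HZ n (m * k) x (gmult HZ m k y z) t
       = x (a mod n + 1) * (y (a div n mod m + 1) * z (a div n div m + 1))"
      using False v by (simp add: HZ_simps a_def Suc_le_eq mult.assoc)
    show ?thesis using L R by simp
  qed
qed

lemma HZ_gamma: "is_gamma_ring HZ"
  unfolding is_gamma_ring_def
proof (intro conjI allI impI)
  show "gobj HZ 0 = {gbp HZ 0}" by (auto simp: HZ_simps)
next
  fix n m f g and x :: "nat \<Rightarrow> int"
  assume "pmap n m f \<and> (\<forall>i\<le>n. f i = g i) \<and> x \<in> gobj HZ n"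
  then show "gact HZ n m f x = gact HZ n m g x"
    by (auto simp: HZ_simps intro!: sum.cong ext)
next
  fix n and x :: "nat \<Rightarrow> int"
  assume x: "x \<in> gobj HZ n"
  show "gact HZ n n (\<lambda>i. i) x = x"
  proof
    fix k
    show "gact HZ n n (\<lambda>i. i) x k = x k"
    proof (cases "k = 0 \<or> n < k")
      case True then show ?thesis using x by (auto simp: HZ_simps)
    next
      case False
      then have "{i \<in> {1..n}. i = k} = {k}" by auto
      then show ?thesis using False by (simp add: HZ_simps)
    qed
  qed
next
  fix n m k f g and x :: "nat \<Rightarrow> int"
  assume "pmap n m f \<and> pmap m k g \<and> x \<in> gobj HZ n"
  then show "gact HZ m k g (gact HZ n m f x) = gact HZ n k (g \<circ> f) x"
    using HZ_comp by blast
next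
  fix n n' m m' f g and x y :: "nat \<Rightarrow> int"
  assume "pmap n n' f \<and> pmap m m' g \<and> x \<in> gobj HZ n \<and> y \<in> gobj HZ m"
  then show "gmult HZ n' m' (gact HZ n n' f x) (gact HZ m m' g y)
            = gact HZ (n * m) (n' * m') (smash_map n n' f g) (gmult HZ n m x y)"
    using HZ_smash by blast
next
  fix n m k and x y z :: "nat \<Rightarrow> int"
  show "gmult HZ (n * m) k (gmult HZ n m x y) z = gmult HZ n (m * k) x (gmult HZ m k y z)"
    by (rule HZ_assoc)
next
  fix n and x :: "nat \<Rightarrow> int"
  assume x: "x \<in> gobj HZ n"
  show "gmult HZ 1 n (gunit HZ) x = x"
    using x by (auto simp: HZ_simps intro!: ext)
  show "gmult HZ n 1 x (gunit HZ) = x"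
  proof
    fix k show "gmult HZ n 1 x (gunit HZ) k = x k"
    proof (cases "k = 0 \<or> n < k")
      case True then show ?thesis using x by (auto simp: HZ_simps)
    next
      case False
      then have "(k - 1) mod n = k - 1" "(k - 1) div n = 0" by auto
      then show ?thesis using False by (simp add: HZ_simps)
    qed
  qed
qed (auto simp: HZ_simps)

declare bitcount.simps[simp del]

lemma bitcount_eq: "bitcount n = n mod 2 + bitcount (n div 2)"
  by (cases "n = 0") (simp_all add: bitcount.simps[of n] bitcount.simps[of 0])

lemma bitcount_0[simp]: "bitcount 0 = 0"
  by (simp add: bitcount.simps)

lemma bitcount_1[simp]: "bitcount (Suc 0) = 1"
  by (simp add: bitcount_eq[of "Suc 0"])

lemma bitcount_pow_add: "r < 2 ^ k \<Longrightarrow> bitcount (2 ^ k + r) = Suc (bitcount r)"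
proof (induction k arbitrary: r)
  case 0
  then show ?case by simp
next
  case (Suc k)
  have "(2 ^ Suc k + r) mod 2 = r mod 2" by simp
  moreover have "(2 ^ Suc k + r) div 2 = 2 ^ k + r div 2" by simp
  moreover have "r div 2 < 2 ^ k" using Suc.prems by simp
  ultimately have "bitcount (2 ^ Suc k + r) = r mod 2 + Suc (bitcount (r div 2))"
    using Suc.IH by (metis bitcount_eq)
  also have "\<dots> = Suc (bitcount r)" by (simp add: bitcount_eq[of r])
  finally show ?case .
qed

definition sg :: "nat \<Rightarrow> nat \<Rightarrow> int" where
  "sg k x = (if x = 0 \<or> 2 ^ k < x then 0 else if even (bitcount (x - 1)) then 1 else -1)"

lemma gpow_HZ: "gpow HZ pm1 k = sg k"
proof (induction k)
  case 0
  show ?case by (auto simp: HZ_simps sg_def)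
next
  case (Suc k)
  show ?case
  proof
    fix t
    show "gpow HZ pm1 (Suc k) t = sg (Suc k) t"
    proof (cases "t = 0 \<or> 2 ^ Suc k < t")
      case True
      then show ?thesis by (auto simp: HZ_simps sg_def mult.commute)
    next
      case False
      define a where "a = t - 1"
      have a: "a < 2 * 2 ^ k" using False by (auto simp: a_def)
      have G: "gpow HZ pm1 (Suc k) t = sg k (a mod 2 ^ k + 1) * pm1 (a div 2 ^ k + 1)"
        using False Suc.IH by (auto simp: HZ_simps a_def mult.commute)
      show ?thesis
      proof (cases "a < 2 ^ k")
        case True
        then show ?thesis using G False by (simp add: sg_def pm1_def a_def)
      next
        case False2: False
        define b where "b = a - 2 ^ k"
        have b: "b < 2 ^ k" "a = 2 ^ k + b" using a False2 by (auto simp: b_def)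
        have m: "a mod 2 ^ k = b" using b by auto
        have d: "a div 2 ^ k = 1" using b by (simp add: div_add_self1)
        have "gpow HZ pm1 (Suc k) t = - sg k (b + 1)" using G m d by (simp add: pm1_def)
        moreover have "bitcount a = Suc (bitcount b)" using b bitcount_pow_add by simp
        ultimately show ?thesis using False b by (simp add: sg_def a_def)
      qed
    qed
  qed
qed

lemma sg_range: "1 \<le> x \<Longrightarrow> x \<le> 2 ^ k \<Longrightarrow> sg k x = 1 \<or> sg k x = -1"
  by (simp add: sg_def)

lemma Aplus_sg: "x \<in> Aplus k \<longleftrightarrow> 1 \<le> x \<and> x \<le> 2 ^ k \<and> sg k x = 1"
  by (auto simp: Aplus_def sg_def)

lemma Aminus_sg: "x \<in> Aminus k \<longleftrightarrow> 1 \<le> x \<and> x \<le> 2 ^ k \<and> sg k x = -1"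
  by (auto simp: Aminus_def Aplus_def sg_def)

lemma sg_1: "sg k 1 = 1" by (simp add: sg_def)

lemma sg_2: "1 \<le> k \<Longrightarrow> sg k 2 = -1"
proof -
  assume "1 \<le> k"
  then have "2 \<le> (2::nat) ^ k" by (metis power_one_right power_increasing_iff one_less_numeral_iff semiring_norm(76))
  then show ?thesis by (simp add: sg_def)
qed

context
  fixes G :: "'a gamma_ring"
  assumes gr: "is_gamma_ring G"
begin

lemma bp_in: "gbp G n \<in> gobj G n" using gr[unfolded is_gamma_ring_def, THEN conjunct1] by blast
lemma obj0: "gobj G 0 = {gbp G 0}" using gr[unfolded is_gamma_ring_def, THEN conjunct2, THEN conjunct1] by simp
lemma act_in: "pmap n m f \<Longrightarrow> x \<in> gobj G n \<Longrightarrow> gact G n m f x \<in> gobj G m"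
  using gr[unfolded is_gamma_ring_def, THEN conjunct2, THEN conjunct2, THEN conjunct1] by blast
lemma act_bp: "pmap n m f \<Longrightarrow> gact G n m f (gbp G n) = gbp G m"
  using gr[unfolded is_gamma_ring_def, THEN conjunct2, THEN conjunct2, THEN conjunct2, THEN conjunct1] by blast
lemma act_cong: "pmap n m f \<Longrightarrow> (\<And>i. i \<le> n \<Longrightarrow> f i = g i) \<Longrightarrow> x \<in> gobj G n
   \<Longrightarrow> gact G n m f x = gact G n m g x"
  using gr[unfolded is_gamma_ring_def, THEN conjunct2, THEN conjunct2, THEN conjunct2, THEN conjunct2, THEN conjunct1] by blast
lemma act_id: "x \<in> gobj G n \<Longrightarrow> gact G n n (\<lambda>i. i) x = x"
  using gr[unfolded is_gamma_ring_def, THEN conjunct2, THEN conjunct2, THEN conjunct2, THEN conjunct2, THEN conjunct2, THEN conjunct1] by blast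
lemma act_comp: "pmap n m f \<Longrightarrow> pmap m k g \<Longrightarrow> x \<in> gobj G n
   \<Longrightarrow> gact G m k g (gact G n m f x) = gact G n k (g \<circ> f) x"
  using gr[unfolded is_gamma_ring_def, THEN conjunct2, THEN conjunct2, THEN conjunct2, THEN conjunct2, THEN conjunct2, THEN conjunct2, THEN conjunct1] by blast
lemma unit_in: "gunit G \<in> gobj G 1" using gr[unfolded is_gamma_ring_def, THEN conjunct2, THEN conjunct2, THEN conjunct2, THEN conjunct2, THEN conjunct2, THEN conjunct2, THEN conjunct2, THEN conjunct1] by blast
lemma mult_in: "x \<in> gobj G n \<Longrightarrow> y \<in> gobj G m \<Longrightarrow> gmult G n m x y \<in> gobj G (n * m)"
  using gr[unfolded is_gamma_ring_def, THEN conjunct2, THEN conjunct2, THEN conjunct2, THEN conjunct2, THEN conjunct2, THEN conjunct2, THEN conjunct2, THEN conjunct2, THEN conjunct1] by blast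
lemma mult_bpl: "y \<in> gobj G m \<Longrightarrow> gmult G n m (gbp G n) y = gbp G (n * m)"
  using gr[unfolded is_gamma_ring_def, THEN conjunct2, THEN conjunct2, THEN conjunct2, THEN conjunct2, THEN conjunct2, THEN conjunct2, THEN conjunct2, THEN conjunct2, THEN conjunct2, THEN conjunct1] by blast
lemma mult_bpr: "x \<in> gobj G n \<Longrightarrow> gmult G n m x (gbp G m) = gbp G (n * m)"
  using gr[unfolded is_gamma_ring_def, THEN conjunct2, THEN conjunct2, THEN conjunct2, THEN conjunct2, THEN conjunct2, THEN conjunct2, THEN conjunct2, THEN conjunct2, THEN conjunct2, THEN conjunct2, THEN conjunct1] by blast
lemma mult_nat: "pmap n n' f \<Longrightarrow> pmap m m' g \<Longrightarrow> x \<in> gobj G n \<Longrightarrow> y \<in> gobj G m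
        \<Longrightarrow> gmult G n' m' (gact G n n' f x) (gact G m m' g y)
            = gact G (n * m) (n' * m') (smash_map n n' f g) (gmult G n m x y)"
  using gr[unfolded is_gamma_ring_def, THEN conjunct2, THEN conjunct2, THEN conjunct2, THEN conjunct2, THEN conjunct2, THEN conjunct2, THEN conjunct2, THEN conjunct2, THEN conjunct2, THEN conjunct2, THEN conjunct2, THEN conjunct1] by blast
lemma mult_assoc: "x \<in> gobj G n \<Longrightarrow> y \<in> gobj G m \<Longrightarrow> z \<in> gobj G k
        \<Longrightarrow> gmult G (n * m) k (gmult G n m x y) z = gmult G n (m * k) x (gmult G m k y z)"
  using gr[unfolded is_gamma_ring_def, THEN conjunct2, THEN conjunct2, THEN conjunct2, THEN conjunct2, THEN conjunct2, THEN conjunct2, THEN conjunct2, THEN conjunct2, THEN conjunct2, THEN conjunct2, THEN conjunct2, THEN conjunct2, THEN conjunct1] by blast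
lemma unit_l: "x \<in> gobj G n \<Longrightarrow> gmult G 1 n (gunit G) x = x"
  using gr[unfolded is_gamma_ring_def, THEN conjunct2, THEN conjunct2, THEN conjunct2, THEN conjunct2, THEN conjunct2, THEN conjunct2, THEN conjunct2, THEN conjunct2, THEN conjunct2, THEN conjunct2, THEN conjunct2, THEN conjunct2, THEN conjunct2] by blast
lemma unit_r: "x \<in> gobj G n \<Longrightarrow> gmult G n 1 x (gunit G) = x"
  using gr[unfolded is_gamma_ring_def, THEN conjunct2, THEN conjunct2, THEN conjunct2, THEN conjunct2, THEN conjunct2, THEN conjunct2, THEN conjunct2, THEN conjunct2, THEN conjunct2, THEN conjunct2, THEN conjunct2, THEN conjunct2, THEN conjunct2] by blast

lemma gpow_in: "r \<in> gobj G 2 \<Longrightarrow> gpow G r k \<in> gobj G (2 ^ k)"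
proof (induction k)
  case 0 then show ?case using unit_in by simp
next
  case (Suc k)
  then show ?case using mult_in[of "gpow G r k" "2^k" r 2] by (simp add: mult.commute)
qed

lemma gpow_add: "r \<in> gobj G 2 \<Longrightarrow>
   gpow G r (k + l) = gmult G (2 ^ k) (2 ^ l) (gpow G r k) (gpow G r l)"
proof (induction l)
  case 0 then show ?case using unit_r gpow_in by simp
next
  case (Suc l)
  have "gpow G r (k + Suc l) = gmult G (2 ^ k * 2 ^ l) 2 (gpow G r (k + l)) r"
    by (simp add: power_add)
  also have "\<dots> = gmult G (2 ^ k * 2 ^ l) 2 (gmult G (2 ^ k) (2 ^ l) (gpow G r k) (gpow G r l)) r"
    using Suc by simp
  also have "\<dots> = gmult G (2 ^ k) (2 ^ l * 2) (gpow G r k) (gmult G (2 ^ l) 2 (gpow G r l) r)"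
    using mult_assoc gpow_in Suc.prems by blast
  also have "\<dots> = gmult G (2 ^ k) (2 ^ Suc l) (gpow G r k) (gpow G r (Suc l))"
    by (simp add: mult.commute)
  finally show ?case .
qed

lemma gpow_1: "r \<in> gobj G 2 \<Longrightarrow> gpow G r 1 = r"
  using unit_l by simp

lemma pmap_comp: "pmap n m f \<Longrightarrow> pmap m k g \<Longrightarrow> pmap n k (g \<circ> f)"
  by (simp add: pmap_def)

lemma raise:
  assumes r: "r \<in> gobj G 2" and p: "gact G 2 1 (p_map 2 2) r = gunit G"
    and f: "pmap (2 ^ k) n f"
  shows "gact G (2 ^ k) n f (gpow G r k)
       = gact G (2 ^ Suc k) n (\<lambda>x. if x \<le> 2 ^ k then f x else 0) (gpow G r (Suc k))"
proof -
  define h where "h = smash_map (2 ^ k) (2 ^ k) (\<lambda>i. i) (p_map 2 2)"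
  have pid: "pmap (2 ^ k) (2 ^ k) (\<lambda>i. i)" by (simp add: pmap_def)
  have pp: "pmap 2 1 (p_map 2 2)" by (simp add: pmap_def p_map_def)
  have xk: "gpow G r k \<in> gobj G (2 ^ k)" using gpow_in r by blast
  have "gmult G (2 ^ k) 1 (gact G (2 ^ k) (2 ^ k) (\<lambda>i. i) (gpow G r k)) (gact G 2 1 (p_map 2 2) r)
      = gact G (2 ^ k * 2) (2 ^ k * 1) h (gmult G (2 ^ k) 2 (gpow G r k) r)"
    unfolding h_def using mult_nat[OF pid pp xk r] .
  then have E1: "gpow G r k = gact G (2 ^ Suc k) (2 ^ k) h (gpow G r (Suc k))"
    using act_id[OF xk] p unit_r[OF xk] by (simp add: mult.commute)
  have hval: "\<And>x. x \<le> 2 ^ Suc k \<Longrightarrow> h x = (if x \<le> 2 ^ k then x else 0)"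
  proof -
    fix x :: nat assume x: "x \<le> 2 ^ Suc k"
    show "h x = (if x \<le> 2 ^ k then x else 0)"
    proof (cases "x = 0")
      case True then show ?thesis by (simp add: h_def smash_map_def)
    next
      case False
      show ?thesis
      proof (cases "x \<le> 2 ^ k")
        case True
        then have "(x - 1) div 2 ^ k = 0" "(x - 1) mod 2 ^ k = x - 1" using False by auto
        then show ?thesis using True False by (simp add: h_def smash_map_def Let_def p_map_def)
      next
        case F2: False
        have lt: "x - 1 - 2 ^ k < 2 ^ k" using x F2 by simp
        have "(x - 1 - 2 ^ k + 2 ^ k) div 2 ^ k = 1" using lt by (simp add: div_add_self2)
        moreover have "x - 1 - 2 ^ k + 2 ^ k = x - 1" using F2 by simp
        ultimately have "(x - 1) div 2 ^ k = 1" by simp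
        then show ?thesis using F2 False by (simp add: h_def smash_map_def Let_def p_map_def)
      qed
    qed
  qed
  have ph: "pmap (2 ^ Suc k) (2 ^ k) h"
    unfolding pmap_def using hval by (simp add: h_def smash_map_def)
  have xs: "gpow G r (Suc k) \<in> gobj G (2 ^ Suc k)" using gpow_in r by blast
  have "gact G (2 ^ k) n f (gpow G r k) = gact G (2 ^ Suc k) n (f \<circ> h) (gpow G r (Suc k))"
    using E1 act_comp[OF ph f xs] by simp
  also have "\<dots> = gact G (2 ^ Suc k) n (\<lambda>x. if x \<le> 2 ^ k then f x else 0) (gpow G r (Suc k))"
  proof (rule act_cong[OF pmap_comp[OF ph f] _ xs])
    fix i :: nat assume "i \<le> 2 ^ Suc k"
    then show "(f \<circ> h) i = (if i \<le> 2 ^ k then f i else 0)"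
      using hval f by (simp add: pmap_def)
  qed
  finally show ?thesis .
qed

end

definition emap :: "nat \<Rightarrow> nat \<Rightarrow> nat \<Rightarrow> nat" where
  "emap i j r = (if r < i then r else if r + 1 < j then r + 1 else r + 2)"

definition fprime :: "(nat \<Rightarrow> nat) \<Rightarrow> nat \<Rightarrow> nat \<Rightarrow> nat \<Rightarrow> nat" where
  "fprime f i j y = (if y = 0 then 0 else if y = 1 then f i else f (emap i j (y - 1)))"

lemma s_map_pmap: "1 \<le> i \<Longrightarrow> i < j \<Longrightarrow> j \<le> N \<Longrightarrow> pmap N (N - 1) (s_map N i j 1)"
  unfolding pmap_def s_map_def Let_def by auto

lemma p_map_pmap: "1 \<le> i \<Longrightarrow> i \<le> N \<Longrightarrow> pmap N (N - 1) (p_map N i)"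
  unfolding pmap_def p_map_def by auto

lemma d_map_pmap: "1 \<le> l \<Longrightarrow> l \<le> M \<Longrightarrow> pmap (M - 1) M (d_map M l)"
  unfolding pmap_def d_map_def by auto

lemma fs: "x \<le> N \<Longrightarrow> 1 \<le> i \<Longrightarrow> i < j \<Longrightarrow> j \<le> N \<Longrightarrow> f i = f j \<Longrightarrow> f 0 = 0
   \<Longrightarrow> fprime f i j (s_map N i j 1 x) = f x"
  unfolding fprime_def s_map_def emap_def Let_def
  by (cases "x = 0"; cases "x = i"; cases "x = j"; cases "x < i"; cases "x < j") (auto simp: Suc_diff_Suc)

lemma fd: "x \<le> N \<Longrightarrow> 1 \<le> i \<Longrightarrow> i < j \<Longrightarrow> j \<le> N \<Longrightarrow> f 0 = 0
   \<Longrightarrow> fprime f i j (d_map (N - 1) 1 (p_map (N - 1) i (p_map N j x)))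
       = (if x = i \<or> x = j then 0 else f x)"
  unfolding fprime_def d_map_def p_map_def emap_def
  by (cases "x = 0"; cases "x = i"; cases "x = j"; cases "x < i"; cases "x < j") (auto simp: Suc_diff_Suc)

lemma fprime_pmap: "pmap N n f \<Longrightarrow> 1 \<le> i \<Longrightarrow> i < j \<Longrightarrow> j \<le> N
   \<Longrightarrow> pmap (N - 1) n (fprime f i j)"
  unfolding pmap_def fprime_def emap_def by auto

context
  fixes G :: "'a gamma_ring"
  assumes gr: "is_gamma_ring G"
begin

lemma fdl_cond3:
  assumes "formal_difference_law G r" "1 \<le> k" "\<pi> permutes {1..2 ^ k}"
    "\<pi> ` Aplus k \<subseteq> Aplus k" "\<pi> ` Aminus k \<subseteq> Aminus k"
  shows "gact G (2 ^ k) (2 ^ k) \<pi> (gpow G r k) = gpow G r k"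
  using assms(1)[unfolded formal_difference_law_def, THEN conjunct2, THEN conjunct2, THEN conjunct2, THEN conjunct2, THEN conjunct2, THEN conjunct1, rule_format, OF assms(2)] assms(3-) by blast

lemma fdl_cond4:
  assumes "formal_difference_law G r" "1 \<le> k" "1 \<le> i" "i < j" "j \<le> 2 ^ k"
    "(i \<in> Aplus k \<and> j \<in> Aminus k) \<or> (i \<in> Aminus k \<and> j \<in> Aplus k)"
    "1 \<le> l" "l \<le> 2 ^ k - 1"
  shows "gact G (2 ^ k) (2 ^ k - 1) (s_map (2 ^ k) i j l) (gpow G r k)
            = gact G (2 ^ k - 2) (2 ^ k - 1) (d_map (2 ^ k - 1) l)
                (gact G (2 ^ k - 1) (2 ^ k - 2) (p_map (2 ^ k - 1) i)
                  (gact G (2 ^ k) (2 ^ k - 1) (p_map (2 ^ k) j) (gpow G r k)))"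
  using assms(1)[unfolded formal_difference_law_def, THEN conjunct2, THEN conjunct2, THEN conjunct2, THEN conjunct2, THEN conjunct2, THEN conjunct2, rule_format, OF assms(2), of i j l] assms(3-) by blast

lemma fdl_in: "formal_difference_law G r \<Longrightarrow> r \<in> gobj G 2"
  unfolding formal_difference_law_def by (rule conjunct1)

lemma fdl_p22: "formal_difference_law G r \<Longrightarrow> gact G 2 1 (p_map 2 2) r = gunit G"
  unfolding formal_difference_law_def by (drule conjunct2, rule conjunct1)

lemma swap_inv:
  assumes fdl: "formal_difference_law G r" and k: "1 \<le> k"
    and x: "x \<in> {1..2 ^ k}" and y: "y \<in> {1..2 ^ k}"
    and cl: "(x \<in> Aplus k \<and> y \<in> Aplus k) \<or> (x \<in> Aminus k \<and> y \<in> Aminus k)"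
    and f: "pmap (2 ^ k) n f"
  shows "gact G (2 ^ k) n (f \<circ> transpose x y) (gpow G r k) = gact G (2 ^ k) n f (gpow G r k)"
proof -
  let ?t = "transpose x y"
  have perm: "?t permutes {1..2 ^ k}" by (rule permutes_swap_id[OF x y])
  have "?t ` Aplus k \<subseteq> Aplus k"
  proof
    fix z assume "z \<in> ?t ` Aplus k"
    then obtain w where w: "w \<in> Aplus k" "z = ?t w" by auto
    show "z \<in> Aplus k"
    proof (cases "w = x \<or> w = y")
      case True
      then have "x \<in> Aplus k \<and> y \<in> Aplus k" using cl w by (auto simp: Aminus_def)
      then show ?thesis using True w by auto
    next
      case False then show ?thesis using w by auto
    qed
  qed
  moreover have "?t ` Aminus k \<subseteq> Aminus k"
  proof
    fix z assume "z \<in> ?t ` Aminus k"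
    then obtain w where w: "w \<in> Aminus k" "z = ?t w" by auto
    show "z \<in> Aminus k"
    proof (cases "w = x \<or> w = y")
      case True
      then have "x \<in> Aminus k \<and> y \<in> Aminus k" using cl w by (auto simp: Aminus_def)
      then show ?thesis using True w by auto
    next
      case False then show ?thesis using w by auto
    qed
  qed
  ultimately have fixt: "gact G (2 ^ k) (2 ^ k) ?t (gpow G r k) = gpow G r k"
    using fdl_cond3[OF fdl k perm] by blast
  have pt: "pmap (2 ^ k) (2 ^ k) ?t"
    unfolding pmap_def using x y by (auto simp: transpose_def)
  have xk: "gpow G r k \<in> gobj G (2 ^ k)" using gpow_in[OF gr fdl_in[OF fdl]] .
  show ?thesis using act_comp[OF gr pt f xk] fixt by simp
qed

lemma cancel:
  assumes fdl: "formal_difference_law G r" and f: "pmap (2 ^ k) n f"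
    and ij: "1 \<le> i" "i < j" "j \<le> 2 ^ k"
    and cl: "(i \<in> Aplus k \<and> j \<in> Aminus k) \<or> (i \<in> Aminus k \<and> j \<in> Aplus k)"
    and fij: "f i = f j"
  shows "gact G (2 ^ k) n f (gpow G r k)
       = gact G (2 ^ k) n (\<lambda>x. if x = i \<or> x = j then 0 else f x) (gpow G r k)"
proof -
  define N where "N = (2::nat) ^ k"
  have N2: "2 \<le> N" using ij N_def by simp
  have k: "1 \<le> k"
  proof (rule ccontr)
    assume "\<not> 1 \<le> k" then have "k = 0" by simp
    then show False using N2 N_def by simp
  qed
  have xk: "gpow G r k \<in> gobj G N" using gpow_in[OF gr fdl_in[OF fdl]] N_def by simp
  have f0: "f 0 = 0" using f by (simp add: pmap_def)
  have c4: "gact G N (N - 1) (s_map N i j 1) (gpow G r k)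
            = gact G (N - 2) (N - 1) (d_map (N - 1) 1)
                (gact G (N - 1) (N - 2) (p_map (N - 1) i)
                  (gact G N (N - 1) (p_map N j) (gpow G r k)))"
    using fdl_cond4[OF fdl k ij cl, of 1] N2 unfolding N_def by simp
  have jN: "j \<le> N" using ij N_def by simp
  have fN: "pmap N n f" using f N_def by simp
  have ps: "pmap N (N - 1) (s_map N i j 1)" using s_map_pmap ij(1,2) jN by blast
  have pj: "pmap N (N - 1) (p_map N j)" using p_map_pmap ij jN by simp
  have NN: "N - 1 - 1 = N - 2" by simp
  have pi: "pmap (N - 1) (N - 2) (p_map (N - 1) i)"
    using p_map_pmap[of i "N - 1"] ij jN NN by simp
  have pd: "pmap (N - 2) (N - 1) (d_map (N - 1) 1)"
    using d_map_pmap[of 1 "N - 1"] N2 NN by simp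
  have pf: "pmap (N - 1) n (fprime f i j)" using fprime_pmap fN ij(1,2) jN by blast
  have y1: "gact G N (N - 1) (p_map N j) (gpow G r k) \<in> gobj G (N - 1)"
    using act_in[OF gr pj xk] .
  have y2: "gact G (N - 1) (N - 2) (p_map (N - 1) i) (gact G N (N - 1) (p_map N j) (gpow G r k))
      \<in> gobj G (N - 2)" using act_in[OF gr pi y1] .
  have "gact G N n f (gpow G r k) = gact G N n (fprime f i j \<circ> s_map N i j 1) (gpow G r k)"
  proof (rule act_cong[OF gr fN _ xk])
    fix x assume "x \<le> N"
    then show "f x = (fprime f i j \<circ> s_map N i j 1) x"
      using fs[of x N i j f] ij(1,2) jN fij f0 by simp
  qed
  also have "\<dots> = gact G (N - 1) n (fprime f i j) (gact G N (N - 1) (s_map N i j 1) (gpow G r k))"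
    using act_comp[OF gr ps pf xk] by simp
  also have "\<dots> = gact G (N - 2) n (fprime f i j \<circ> d_map (N - 1) 1)
        (gact G (N - 1) (N - 2) (p_map (N - 1) i) (gact G N (N - 1) (p_map N j) (gpow G r k)))"
    using c4 act_comp[OF gr pd pf y2] by simp
  also have "\<dots> = gact G (N - 1) n (fprime f i j \<circ> d_map (N - 1) 1 \<circ> p_map (N - 1) i)
        (gact G N (N - 1) (p_map N j) (gpow G r k))"
    using act_comp[OF gr pi pmap_comp[OF gr pd pf] y1] by simp
  also have "\<dots> = gact G N n (fprime f i j \<circ> d_map (N - 1) 1 \<circ> p_map (N - 1) i \<circ> p_map N j)
        (gpow G r k)"
    using act_comp[OF gr pj pmap_comp[OF gr pi pmap_comp[OF gr pd pf]] xk] by simp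
  also have "\<dots> = gact G N n (\<lambda>x. if x = i \<or> x = j then 0 else f x) (gpow G r k)"
  proof (rule act_cong[OF gr _ _ xk])
    show "pmap N n (fprime f i j \<circ> d_map (N - 1) 1 \<circ> p_map (N - 1) i \<circ> p_map N j)"
      using pmap_comp[OF gr pj pmap_comp[OF gr pi pmap_comp[OF gr pd pf]]] by (simp add: comp_assoc)
    fix x assume "x \<le> N"
    then show "(fprime f i j \<circ> d_map (N - 1) 1 \<circ> p_map (N - 1) i \<circ> p_map N j) x
        = (if x = i \<or> x = j then 0 else f x)"
      using fd[of x N i j f] ij(1,2) jN f0 by simp
  qed
  finally show ?thesis unfolding N_def .
qed

end

lemma sum_12: "(\<Sum>i\<in>{i\<in>{1..2::nat}. P i}. a i) = (if P 1 then a 1 else 0) + (if P 2 then (a 2 :: int) else 0)"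
proof -
  have "{i\<in>{1..2::nat}. P i} = (if P 1 then {1} else {}) \<union> (if P 2 then {2} else {})"
    by (auto simp: le_Suc_eq numeral_2_eq_2)
  then show ?thesis by auto
qed

lemma HZ_two_points:
  assumes ij: "i \<noteq> j" "i \<in> {1..N}" "j \<in> {1..N}"
    and same: "\<And>x. x \<in> {1..N} \<Longrightarrow> x \<noteq> i \<Longrightarrow> x \<noteq> j \<Longrightarrow> f x = g x"
    and fi: "f i = f j" and gi: "g i = 0" "g j = 0"
    and v: "v i + v j = 0"
  shows "gact HZ N M f v = gact HZ N M g v"
proof
  fix t
  show "gact HZ N M f v t = gact HZ N M g v t"
  proof (cases "t = 0 \<or> M < t")
    case True then show ?thesis by (simp add: HZ_simps)
  next
    case False
    define Sg where "Sg = {x\<in>{1..N}. g x = t}"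
    have Sg: "Sg = {x\<in>{1..N}. f x = t} - {i, j}"
    proof (rule set_eqI)
      fix x
      show "x \<in> Sg \<longleftrightarrow> x \<in> {x\<in>{1..N}. f x = t} - {i, j}"
      proof
        assume x: "x \<in> Sg"
        then have "x \<noteq> i" "x \<noteq> j" using gi False by (auto simp: Sg_def)
        then show "x \<in> {x\<in>{1..N}. f x = t} - {i, j}" using x same by (auto simp: Sg_def)
      next
        assume x: "x \<in> {x\<in>{1..N}. f x = t} - {i, j}"
        then show "x \<in> Sg" using same by (auto simp: Sg_def)
      qed
    qed
    have fin: "finite Sg" by (simp add: Sg_def)
    have ni: "i \<notin> Sg" "j \<notin> Sg" using Sg by auto
    show ?thesis
    proof (cases "f i = t")
      case True
      then have "{x\<in>{1..N}. f x = t} = insert i (insert j Sg)" using Sg fi ij by auto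
      then have "(\<Sum>x\<in>{x\<in>{1..N}. f x = t}. v x) = v i + v j + (\<Sum>x\<in>Sg. v x)"
        using fin ni ij by simp
      then show ?thesis using False v by (simp add: HZ_simps Sg_def)
    next
      case F2: False
      then have "{x\<in>{1..N}. f x = t} = Sg" using Sg fi by auto
      then show ?thesis using False by (simp add: HZ_simps Sg_def)
    qed
  qed
qed

lemma s_map_comp:
  assumes "x \<le> N" "1 \<le> i" "i < j" "j \<le> N" "x \<noteq> i" "x \<noteq> j" "1 \<le> l"
  shows "s_map N i j l x = d_map (N - 1) l (p_map (N - 1) i (p_map N j x))"
  using assms unfolding s_map_def d_map_def p_map_def Let_def
  by (cases "x = 0"; cases "x < i"; cases "x < j") auto

lemma dpp_zero:
  assumes "1 \<le> i" "i < j" "x = i \<or> x = j"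
  shows "d_map (N - 1) l (p_map (N - 1) i (p_map N j x)) = 0"
  using assms unfolding d_map_def p_map_def by auto

lemma fdl_HZ: "formal_difference_law HZ pm1"
  unfolding formal_difference_law_def
proof (intro conjI allI impI)
  show "pm1 \<in> gobj HZ 2" by (simp add: HZ_simps pm1_def)
  show "gact HZ 2 1 (p_map 2 2) pm1 = gunit HZ"
    unfolding HZ_simps sum_12 by (rule ext) (auto simp: p_map_def pm1_def)
  show "gact HZ 2 1 (s_map 2 1 2 1) pm1 = gbp HZ 1"
    unfolding HZ_simps sum_12 by (rule ext) (auto simp: s_map_def pm1_def)
  show "gmult HZ 1 2 (gact HZ 2 1 (p_map 2 1) pm1) pm1 = gact HZ 2 2 swap12 pm1"
  proof
    fix k :: nat
    show "gmult HZ 1 2 (gact HZ 2 1 (p_map 2 1) pm1) pm1 k = gact HZ 2 2 swap12 pm1 k"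
      unfolding HZ_simps sum_12
      by (cases "k = 0 \<or> 2 < k") (auto simp: p_map_def pm1_def swap12_def le_Suc_eq numeral_2_eq_2)
  qed
  show "gmult HZ 2 1 pm1 (gact HZ 2 1 (p_map 2 1) pm1) = gact HZ 2 2 swap12 pm1"
  proof
    fix k :: nat
    show "gmult HZ 2 1 pm1 (gact HZ 2 1 (p_map 2 1) pm1) k = gact HZ 2 2 swap12 pm1 k"
      unfolding HZ_simps sum_12
      by (cases "k = 0 \<or> 2 < k") (auto simp: p_map_def pm1_def swap12_def le_Suc_eq numeral_2_eq_2)
  qed
next
  fix k :: nat and \<pi>
  assume "1 \<le> k" and h: "\<pi> permutes {1..2 ^ k} \<and> \<pi> ` Aplus k \<subseteq> Aplus k \<and> \<pi> ` Aminus k \<subseteq> Aminus k"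
  then have perm: "\<pi> permutes {1..2 ^ k}" and ap: "\<pi> ` Aplus k \<subseteq> Aplus k"
    and am: "\<pi> ` Aminus k \<subseteq> Aminus k" by auto
  show "gact HZ (2 ^ k) (2 ^ k) \<pi> (gpow HZ pm1 k) = gpow HZ pm1 k"
    unfolding gpow_HZ
  proof
    fix t
    show "gact HZ (2 ^ k) (2 ^ k) \<pi> (sg k) t = sg k t"
    proof (cases "t = 0 \<or> 2 ^ k < t")
      case True then show ?thesis by (auto simp: HZ_simps sg_def)
    next
      case False
      then have t: "t \<in> {1..2 ^ k}" by auto
      define w where "w = inv \<pi> t"
      have pw: "\<pi> w = t" using permutes_inverses(1)[OF perm] w_def by simp
      have w: "w \<in> {1..2 ^ k}" using permutes_in_image[OF perm, of w] pw t by simp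
      have S: "{i \<in> {1..2 ^ k}. \<pi> i = t} = {w}"
      proof
        show "{i \<in> {1..2 ^ k}. \<pi> i = t} \<subseteq> {w}"
          using permutes_inj[OF perm] pw by (auto dest: injD)
        show "{w} \<subseteq> {i \<in> {1..2 ^ k}. \<pi> i = t}" using w pw by auto
      qed
      have "sg k w = sg k t"
      proof (cases "w \<in> Aplus k")
        case True
        then have "t \<in> Aplus k" using ap pw by blast
        then show ?thesis using True by (simp add: Aplus_sg)
      next
        case F2: False
        then have "w \<in> Aminus k" using w by (simp add: Aminus_def)
        then have "t \<in> Aminus k" using am pw by blast
        then show ?thesis using \<open>w \<in> Aminus k\<close> by (simp add: Aminus_sg)
      qed
      then show ?thesis using False S by (simp add: HZ_simps)
    qed
  qed
next
  fix k i j l :: nat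
  assume k: "1 \<le> k" and h: "1 \<le> i \<and> i < j \<and> j \<le> 2 ^ k \<and>
        (i \<in> Aplus k \<and> j \<in> Aminus k \<or> i \<in> Aminus k \<and> j \<in> Aplus k) \<and>
        1 \<le> l \<and> l \<le> 2 ^ k - 1"
  define N where "N = (2::nat) ^ k"
  have ij: "1 \<le> i" "i < j" "j \<le> N" and l: "1 \<le> l" "l \<le> N - 1" using h N_def by auto
  have cl: "i \<in> Aplus k \<and> j \<in> Aminus k \<or> i \<in> Aminus k \<and> j \<in> Aplus k" using h by blast
  have v: "sg k i + sg k j = 0" using cl by (auto simp: Aplus_sg Aminus_sg)
  have NN: "N - 1 - 1 = N - 2" by simp
  have pj: "pmap N (N - 1) (p_map N j)" using p_map_pmap ij by simp
  have pi: "pmap (N - 1) (N - 2) (p_map (N - 1) i)"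
    using p_map_pmap[of i "N - 1"] ij NN by simp
  have pd: "pmap (N - 2) (N - 1) (d_map (N - 1) l)"
    using d_map_pmap[of l "N - 1"] l NN by simp
  have "gact HZ (N - 2) (N - 1) (d_map (N - 1) l)
          (gact HZ (N - 1) (N - 2) (p_map (N - 1) i) (gact HZ N (N - 1) (p_map N j) (sg k)))
      = gact HZ N (N - 1) (d_map (N - 1) l \<circ> p_map (N - 1) i \<circ> p_map N j) (sg k)"
    using HZ_comp[OF pi pd] HZ_comp[OF pj pmap_comp[OF HZ_gamma pi pd]] by (simp add: comp_assoc)
  also have "\<dots> = gact HZ N (N - 1) (s_map N i j l) (sg k)"
  proof (rule HZ_two_points[symmetric])
    show "i \<noteq> j" "i \<in> {1..N}" "j \<in> {1..N}" using ij by auto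
    show "\<And>x. x \<in> {1..N} \<Longrightarrow> x \<noteq> i \<Longrightarrow> x \<noteq> j \<Longrightarrow>
      s_map N i j l x = (d_map (N - 1) l \<circ> p_map (N - 1) i \<circ> p_map N j) x"
      using s_map_comp ij l by simp
    show "s_map N i j l i = s_map N i j l j" using ij by (simp add: s_map_def)
    show "(d_map (N - 1) l \<circ> p_map (N - 1) i \<circ> p_map N j) i = 0"
      "(d_map (N - 1) l \<circ> p_map (N - 1) i \<circ> p_map N j) j = 0"
      using dpp_zero ij by auto
    show "sg k i + sg k j = 0" by (rule v)
  qed
  finally show "gact HZ (2 ^ k) (2 ^ k - 1) (s_map (2 ^ k) i j l) (gpow HZ pm1 k)
            = gact HZ (2 ^ k - 2) (2 ^ k - 1) (d_map (2 ^ k - 1) l)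
                (gact HZ (2 ^ k - 1) (2 ^ k - 2) (p_map (2 ^ k - 1) i)
                  (gact HZ (2 ^ k) (2 ^ k - 1) (p_map (2 ^ k) j) (gpow HZ pm1 k)))"
    unfolding gpow_HZ N_def by simp
qed

definition nzc :: "nat \<Rightarrow> (nat \<Rightarrow> nat) \<Rightarrow> nat" where
  "nzc N f = card {x\<in>{1..N}. f x \<noteq> 0}"

definition dis :: "nat \<Rightarrow> (nat \<Rightarrow> nat) \<Rightarrow> (nat \<Rightarrow> nat) \<Rightarrow> nat" where
  "dis N f g = card {x\<in>{1..N}. f x \<noteq> g x}"

definition reduced :: "nat \<Rightarrow> (nat \<Rightarrow> nat) \<Rightarrow> bool" where
  "reduced k f \<longleftrightarrow> (\<forall>i j. i \<in> {1..2 ^ k} \<and> j \<in> {1..2 ^ k} \<and> f i = f j \<and> f i \<noteq> 0 \<longrightarrow> sg k i = sg k j)"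

lemma dis_sym: "dis N f g = dis N g f"
  unfolding dis_def by (rule arg_cong[where f=card]) auto

lemma sum_reduced:
  assumes red: "reduced k f" and x: "x \<in> {1..2 ^ k}" "f x = t" "t \<noteq> 0"
  shows "(\<Sum>z\<in>{z\<in>{1..2 ^ k}. f z = t}. sg k z) = of_nat (card {z\<in>{1..2 ^ k}. f z = t}) * sg k x"
proof -
  have "(\<Sum>z\<in>{z\<in>{1..2 ^ k}. f z = t}. sg k z) = (\<Sum>z\<in>{z\<in>{1..2 ^ k}. f z = t}. sg k x)"
    using red x unfolding reduced_def by (intro sum.cong) auto
  then show ?thesis by simp
qed

lemma sg_abs: "x \<in> {1..2 ^ k} \<Longrightarrow> \<bar>sg k x\<bar> = 1"
  using sg_range[of x k] by auto

lemma key: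
  assumes f: "pmap (2 ^ k) n f" and g: "pmap (2 ^ k) n g"
    and rf: "reduced k f" and rg: "reduced k g"
    and hz: "gact HZ (2 ^ k) n f (sg k) = gact HZ (2 ^ k) n g (sg k)"
    and x: "x \<in> {1..2 ^ k}" and fx: "f x \<noteq> 0" and gx: "g x \<noteq> f x"
  shows "\<exists>y\<in>{1..2 ^ k}. g y = f x \<and> f y \<noteq> f x \<and> sg k y = sg k x"
proof -
  define t where "t = f x"
  have tn: "t \<le> n" using f x by (auto simp: pmap_def t_def)
  define F where "F = {z\<in>{1..2 ^ k}. f z = t}"
  define Gs where "Gs = {z\<in>{1..2 ^ k}. g z = t}"
  have hzt: "(\<Sum>z\<in>F. sg k z) = (\<Sum>z\<in>Gs. sg k z)"
    using fun_cong[OF hz, of t] tn fx by (simp add: HZ_simps F_def Gs_def t_def)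
  have sF: "(\<Sum>z\<in>F. sg k z) = of_nat (card F) * sg k x"
    using sum_reduced[OF rf x] fx unfolding F_def t_def by simp
  have xF: "x \<in> F" using x by (simp add: F_def t_def)
  have finF: "finite F" by (simp add: F_def)
  have cF: "card F \<ge> 1" using xF finF by (metis One_nat_def Suc_leI card_gt_0_iff empty_iff)
  have ax: "\<bar>sg k x\<bar> = 1" using sg_abs x .
  have "\<exists>y\<in>Gs. f y \<noteq> t"
  proof (rule ccontr)
    assume "\<not> (\<exists>y\<in>Gs. f y \<noteq> t)"
    then have sub: "Gs \<subseteq> F" by (auto simp: Gs_def F_def)
    have "x \<notin> Gs" using gx by (simp add: Gs_def t_def)
    then have "Gs \<subset> F" using sub xF by blast
    then have cl: "card Gs < card F" using finF by (simp add: psubset_card_mono)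
    show False
    proof (cases "Gs = {}")
      case True
      then have "of_nat (card F) * sg k x = 0" using hzt sF by simp
      then show False using cF ax by auto
    next
      case False
      then obtain w where w: "w \<in> Gs" by auto
      have "(\<Sum>z\<in>Gs. sg k z) = of_nat (card Gs) * sg k w"
        using sum_reduced[OF rg, of w t] w fx unfolding Gs_def t_def by simp
      then have "\<bar>of_nat (card Gs) * sg k w\<bar> = \<bar>of_nat (card F) * sg k x\<bar>" using hzt sF by simp
      moreover have "\<bar>sg k w\<bar> = 1" using sg_abs w by (simp add: Gs_def)
      ultimately have "card Gs = card F" using ax by (simp add: abs_mult)
      then show False using cl by simp
    qed
  qed
  then obtain y where y: "y \<in> Gs" "f y \<noteq> t" by blast
  have yr: "y \<in> {1..2 ^ k}" using y by (simp add: Gs_def)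
  have finG: "finite Gs" by (simp add: Gs_def)
  have cG: "card Gs \<ge> 1" using y finG by (metis One_nat_def Suc_leI card_gt_0_iff empty_iff)
  have "(\<Sum>z\<in>Gs. sg k z) = of_nat (card Gs) * sg k y"
    using sum_reduced[OF rg, of y t] y fx unfolding Gs_def t_def by simp
  then have eq: "of_nat (card Gs) * sg k y = of_nat (card F) * sg k x" using hzt sF by simp
  have "sg k y = sg k x"
  proof (rule ccontr)
    assume ne: "sg k y \<noteq> sg k x"
    have "sg k y = 1 \<or> sg k y = -1" using sg_range yr by auto
    moreover have "sg k x = 1 \<or> sg k x = -1" using sg_range x by auto
    ultimately show False using ne eq cF cG by auto
  qed
  then show ?thesis using y yr by (auto simp: Gs_def t_def)
qed

lemma transpose_invol: "transpose x y (transpose x y z) = z"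
  by (simp add: transpose_def)

lemma nz_swap:
  assumes "x \<in> {1..N}" "y \<in> {1..N}"
  shows "nzc N (g \<circ> transpose x y) = nzc N g"
proof -
  let ?t = "transpose x y"
  have img: "?t ` {z\<in>{1..N}. g (?t z) \<noteq> 0} = {z\<in>{1..N}. g z \<noteq> 0}"
  proof
    show "?t ` {z\<in>{1..N}. g (?t z) \<noteq> 0} \<subseteq> {z\<in>{1..N}. g z \<noteq> 0}"
      using assms by (auto simp: transpose_def)
    show "{z\<in>{1..N}. g z \<noteq> 0} \<subseteq> ?t ` {z\<in>{1..N}. g (?t z) \<noteq> 0}"
    proof
      fix z assume z: "z \<in> {z\<in>{1..N}. g z \<noteq> 0}"
      have "?t z \<in> {z\<in>{1..N}. g (?t z) \<noteq> 0}" using z assms transpose_invol[of x y z]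
        by (auto simp: transpose_def)
      moreover have "z = ?t (?t z)" by (simp add: transpose_invol)
      ultimately show "z \<in> ?t ` {z\<in>{1..N}. g (?t z) \<noteq> 0}" by blast
    qed
  qed
  have inj: "inj_on ?t {z\<in>{1..N}. g (?t z) \<noteq> 0}"
    by (metis inj_on_inverseI transpose_invol)
  have ce: "{z\<in>{1..N}. (g \<circ> ?t) z \<noteq> 0} = {z\<in>{1..N}. g (?t z) \<noteq> 0}" by simp
  have "card (?t ` {z\<in>{1..N}. g (?t z) \<noteq> 0}) = card {z\<in>{1..N}. g (?t z) \<noteq> 0}"
    by (rule card_image[OF inj])
  then show ?thesis unfolding nzc_def ce img by simp
qed

lemma dis_swap:
  assumes x: "x \<in> {1..N}" and y: "y \<in> {1..N}" and gy: "g y = f x" and gx: "g x \<noteq> f x"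
    and fy: "f y \<noteq> f x"
  shows "dis N f (g \<circ> transpose x y) < dis N f g"
proof -
  let ?t = "transpose x y"
  have xy: "x \<noteq> y" using gy gx by auto
  have sub: "{z\<in>{1..N}. f z \<noteq> (g \<circ> ?t) z} \<subseteq> {z\<in>{1..N}. f z \<noteq> g z} - {x}"
  proof
    fix z assume z: "z \<in> {z\<in>{1..N}. f z \<noteq> (g \<circ> ?t) z}"
    have "z \<noteq> x" using z gy by auto
    moreover have "f z \<noteq> g z"
    proof (cases "z = y")
      case True then show ?thesis using fy gy by simp
    next
      case False then show ?thesis using z \<open>z \<noteq> x\<close> by simp
    qed
    ultimately show "z \<in> {z\<in>{1..N}. f z \<noteq> g z} - {x}" using z by auto
  qed
  have "x \<in> {z\<in>{1..N}. f z \<noteq> g z}" using x gx by auto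
  then have "card ({z\<in>{1..N}. f z \<noteq> g z} - {x}) < card {z\<in>{1..N}. f z \<noteq> g z}"
    by (intro card_Diff1_less) auto
  moreover have "card {z\<in>{1..N}. f z \<noteq> (g \<circ> ?t) z} \<le> card ({z\<in>{1..N}. f z \<noteq> g z} - {x})"
    using sub by (simp add: card_mono)
  ultimately show ?thesis unfolding dis_def by linarith
qed

lemma nz_cancel:
  assumes "i \<in> {1..N}" "j \<in> {1..N}" "i \<noteq> j" "f i \<noteq> 0" "f j \<noteq> 0"
  shows "nzc N (\<lambda>x. if x = i \<or> x = j then 0 else f x) + 2 = nzc N f"
proof -
  have e: "{x\<in>{1..N}. (if x = i \<or> x = j then 0 else f x) \<noteq> 0} = {x\<in>{1..N}. f x \<noteq> 0} - {i, j}"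
    by auto
  have "{i, j} \<subseteq> {x\<in>{1..N}. f x \<noteq> 0}" using assms by auto
  then have "card ({x\<in>{1..N}. f x \<noteq> 0} - {i, j}) = card {x\<in>{1..N}. f x \<noteq> 0} - 2"
    using assms by (simp add: card_Diff_subset)
  moreover have "card {x\<in>{1..N}. f x \<noteq> 0} \<ge> 2"
  proof -
    have "card {i, j} = 2" using assms by simp
    moreover have "card {i, j} \<le> card {x\<in>{1..N}. f x \<noteq> 0}"
      using \<open>{i, j} \<subseteq> _\<close> by (intro card_mono) auto
    ultimately show ?thesis by simp
  qed
  ultimately show ?thesis unfolding nzc_def e by simp
qed

lemma dis_cancel:
  "dis N (\<lambda>x. if x = i \<or> x = j then 0 else f x) g \<le> dis N f g + 2"
proof -
  have "{x\<in>{1..N}. (if x = i \<or> x = j then 0 else f x) \<noteq> g x} \<subseteq> {x\<in>{1..N}. f x \<noteq> g x} \<union> {i, j}"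
    by auto
  then have "card {x\<in>{1..N}. (if x = i \<or> x = j then 0 else f x) \<noteq> g x}
      \<le> card ({x\<in>{1..N}. f x \<noteq> g x} \<union> {i, j})" by (simp add: card_mono)
  also have "\<dots> \<le> card {x\<in>{1..N}. f x \<noteq> g x} + card {i, j}" by (rule card_Un_le)
  also have "\<dots> \<le> card {x\<in>{1..N}. f x \<noteq> g x} + 2" by (simp add: card_insert_le_m1)
  finally show ?thesis unfolding dis_def .
qed

lemma classes_opp:
  assumes "i \<in> {1..2 ^ k}" "j \<in> {1..2 ^ k}" "sg k i \<noteq> sg k j"
  shows "(i \<in> Aplus k \<and> j \<in> Aminus k) \<or> (i \<in> Aminus k \<and> j \<in> Aplus k)"
  using assms sg_range[of i k] sg_range[of j k] by (auto simp: Aplus_sg Aminus_sg)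

lemma classes_same:
  assumes "i \<in> {1..2 ^ k}" "j \<in> {1..2 ^ k}" "sg k i = sg k j"
  shows "(i \<in> Aplus k \<and> j \<in> Aplus k) \<or> (i \<in> Aminus k \<and> j \<in> Aminus k)"
  using assms sg_range[of i k] by (auto simp: Aplus_sg Aminus_sg)

context
  fixes G :: "'a gamma_ring" and r
  assumes gr: "is_gamma_ring G" and fdl: "formal_difference_law G r"
begin

lemma cancel_step:
  assumes f: "pmap (2 ^ k) n f" and nr: "\<not> reduced k f"
  shows "\<exists>f0. pmap (2 ^ k) n f0 \<and> gact G (2 ^ k) n f0 (gpow G r k) = gact G (2 ^ k) n f (gpow G r k)
     \<and> gact HZ (2 ^ k) n f0 (sg k) = gact HZ (2 ^ k) n f (sg k)
     \<and> nzc (2 ^ k) f0 + 2 = nzc (2 ^ k) f \<and> (\<forall>g. dis (2 ^ k) f0 g \<le> dis (2 ^ k) f g + 2)"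
proof -
  have step: "\<exists>f0. pmap (2 ^ k) n f0 \<and> gact G (2 ^ k) n f0 (gpow G r k) = gact G (2 ^ k) n f (gpow G r k)
     \<and> gact HZ (2 ^ k) n f0 (sg k) = gact HZ (2 ^ k) n f (sg k)
     \<and> nzc (2 ^ k) f0 + 2 = nzc (2 ^ k) f \<and> (\<forall>g. dis (2 ^ k) f0 g \<le> dis (2 ^ k) f g + 2)"
    if ab: "a < b" "a \<in> {1..2 ^ k}" "b \<in> {1..2 ^ k}" "f a = f b" "f a \<noteq> 0" "sg k a \<noteq> sg k b"
    for a b
  proof (intro exI conjI)
    let ?f0 = "\<lambda>x. if x = a \<or> x = b then 0 else f x"
    have cl: "(a \<in> Aplus k \<and> b \<in> Aminus k) \<or> (a \<in> Aminus k \<and> b \<in> Aplus k)"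
      using classes_opp ab by blast
    have a1: "1 \<le> a" "b \<le> 2 ^ k" using ab by auto
    show "pmap (2 ^ k) n ?f0" using f by (simp add: pmap_def)
    show "gact G (2 ^ k) n ?f0 (gpow G r k) = gact G (2 ^ k) n f (gpow G r k)"
      using cancel[OF gr fdl f a1(1) ab(1) a1(2) cl ab(4)] by simp
    show "gact HZ (2 ^ k) n ?f0 (sg k) = gact HZ (2 ^ k) n f (sg k)"
      using cancel[OF HZ_gamma fdl_HZ f a1(1) ab(1) a1(2) cl ab(4)] by (simp add: gpow_HZ)
    show "nzc (2 ^ k) ?f0 + 2 = nzc (2 ^ k) f"
      using nz_cancel[of a "2 ^ k" b f] ab by simp
    show "\<forall>g. dis (2 ^ k) ?f0 g \<le> dis (2 ^ k) f g + 2" using dis_cancel by blast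
  qed
  obtain i j where ij: "i \<in> {1..2 ^ k}" "j \<in> {1..2 ^ k}" "f i = f j" "f i \<noteq> 0" "sg k i \<noteq> sg k j"
    using nr unfolding reduced_def by blast
  then have "i \<noteq> j" by auto
  then have "i < j \<or> j < i" by auto
  then show ?thesis
  proof
    assume "i < j" then show ?thesis using step ij by blast
  next
    assume "j < i" then show ?thesis using step[of j i] ij by auto
  qed
qed

lemma swap_step:
  assumes f: "pmap (2 ^ k) n f" and g: "pmap (2 ^ k) n g"
    and x: "x \<in> {1..2 ^ k}" and y: "y \<in> {1..2 ^ k}"
    and gy: "g y = f x" and gx: "g x \<noteq> f x" and fy: "f y \<noteq> f x" and s: "sg k y = sg k x"
  shows "pmap (2 ^ k) n (g \<circ> transpose x y)
     \<and> gact G (2 ^ k) n (g \<circ> transpose x y) (gpow G r k) = gact G (2 ^ k) n g (gpow G r k)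
     \<and> gact HZ (2 ^ k) n (g \<circ> transpose x y) (sg k) = gact HZ (2 ^ k) n g (sg k)
     \<and> nzc (2 ^ k) (g \<circ> transpose x y) = nzc (2 ^ k) g
     \<and> dis (2 ^ k) f (g \<circ> transpose x y) < dis (2 ^ k) f g"
proof (intro conjI)
  have xy: "x \<noteq> y" using gx gy by auto
  have k: "1 \<le> k"
  proof (rule ccontr)
    assume "\<not> 1 \<le> k" then have "k = 0" by simp
    then show False using x y xy by auto
  qed
  have cl: "(x \<in> Aplus k \<and> y \<in> Aplus k) \<or> (x \<in> Aminus k \<and> y \<in> Aminus k)"
    using classes_same x y s by auto
  show "pmap (2 ^ k) n (g \<circ> transpose x y)"
    using g x y unfolding pmap_def by (auto simp: transpose_def)
  show "gact G (2 ^ k) n (g \<circ> transpose x y) (gpow G r k) = gact G (2 ^ k) n g (gpow G r k)"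
    by (rule swap_inv[OF gr fdl k x y cl g])
  show "gact HZ (2 ^ k) n (g \<circ> transpose x y) (sg k) = gact HZ (2 ^ k) n g (sg k)"
    using swap_inv[OF HZ_gamma fdl_HZ k x y cl g] by (simp add: gpow_HZ)
  show "nzc (2 ^ k) (g \<circ> transpose x y) = nzc (2 ^ k) g" by (rule nz_swap[OF x y])
  show "dis (2 ^ k) f (g \<circ> transpose x y) < dis (2 ^ k) f g" by (rule dis_swap[OF x y gy gx fy])
qed

lemma WD1:
  "pmap (2 ^ k) n f \<Longrightarrow> pmap (2 ^ k) n g \<Longrightarrow> gact HZ (2 ^ k) n f (sg k) = gact HZ (2 ^ k) n g (sg k)
   \<Longrightarrow> gact G (2 ^ k) n f (gpow G r k) = gact G (2 ^ k) n g (gpow G r k)"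
proof (induction "3 * (nzc (2 ^ k) f + nzc (2 ^ k) g) + dis (2 ^ k) f g" arbitrary: f g rule: less_induct)
  case less
  note f = less.prems(1) and g = less.prems(2) and hz = less.prems(3)
  show ?case
  proof (cases "reduced k f")
    case False
    then obtain f0 where f0: "pmap (2 ^ k) n f0"
      "gact G (2 ^ k) n f0 (gpow G r k) = gact G (2 ^ k) n f (gpow G r k)"
      "gact HZ (2 ^ k) n f0 (sg k) = gact HZ (2 ^ k) n f (sg k)"
      "nzc (2 ^ k) f0 + 2 = nzc (2 ^ k) f" "dis (2 ^ k) f0 g \<le> dis (2 ^ k) f g + 2"
      using cancel_step[OF f] by blast
    have "gact G (2 ^ k) n f0 (gpow G r k) = gact G (2 ^ k) n g (gpow G r k)"
      using less.hyps[OF _ f0(1) g] f0 hz by simp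
    then show ?thesis using f0(2) by simp
  next
    case rf: True
    show ?thesis
    proof (cases "reduced k g")
      case False
      then obtain g0 where g0: "pmap (2 ^ k) n g0"
        "gact G (2 ^ k) n g0 (gpow G r k) = gact G (2 ^ k) n g (gpow G r k)"
        "gact HZ (2 ^ k) n g0 (sg k) = gact HZ (2 ^ k) n g (sg k)"
        "nzc (2 ^ k) g0 + 2 = nzc (2 ^ k) g" "dis (2 ^ k) g0 f \<le> dis (2 ^ k) g f + 2"
        using cancel_step[OF g] by blast
      have "gact G (2 ^ k) n f (gpow G r k) = gact G (2 ^ k) n g0 (gpow G r k)"
        using less.hyps[OF _ f g0(1)] g0 hz dis_sym[of "2 ^ k" f g0] dis_sym[of "2 ^ k" f g] by simp
      then show ?thesis using g0(2) by simp
    next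
      case rg: True
      show ?thesis
      proof (cases "\<forall>x\<in>{1..2 ^ k}. f x = g x")
        case True
        have xk: "gpow G r k \<in> gobj G (2 ^ k)" using gpow_in[OF gr fdl_in[OF gr fdl]] .
        show ?thesis
        proof (rule act_cong[OF gr f _ xk])
          fix i :: nat assume "i \<le> 2 ^ k"
          then show "f i = g i" using True f g by (cases "i = 0") (auto simp: pmap_def)
        qed
      next
        case False
        then obtain x where x: "x \<in> {1..2 ^ k}" "f x \<noteq> g x" by blast
        show ?thesis
        proof (cases "f x = 0")
          case False
          obtain y where y: "y \<in> {1..2 ^ k}" "g y = f x" "f y \<noteq> f x" "sg k y = sg k x"
            using key[OF f g rf rg hz x(1) False] x(2) by metis
          note st = swap_step[OF f g x(1) y(1) y(2) _ y(3) y(4)]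
          have "gact G (2 ^ k) n f (gpow G r k) = gact G (2 ^ k) n (g \<circ> transpose x y) (gpow G r k)"
            using less.hyps[of f "g \<circ> transpose x y"] st x(2) f hz by simp
          then show ?thesis using st x(2) by simp
        next
          case True
          then have gx: "g x \<noteq> 0" using x by simp
          obtain y where y: "y \<in> {1..2 ^ k}" "f y = g x" "g y \<noteq> g x" "sg k y = sg k x"
            using key[OF g f rg rf hz[symmetric] x(1) gx] x(2) by metis
          note st = swap_step[OF g f x(1) y(1) y(2) _ y(3) y(4)]
          have "dis (2 ^ k) (f \<circ> transpose x y) g < dis (2 ^ k) f g"
            using st x(2) dis_sym[of "2 ^ k" g] by metis
          then have "gact G (2 ^ k) n (f \<circ> transpose x y) (gpow G r k) = gact G (2 ^ k) n g (gpow G r k)"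
            using less.hyps[of "f \<circ> transpose x y" g] st x(2) g hz by simp
          then show ?thesis using st x(2) by simp
        qed
      qed
    qed
  qed
qed

lemma raise_iter:
  assumes f: "pmap (2 ^ k) n f"
  shows "gact G (2 ^ k) n f (gpow G r k)
       = gact G (2 ^ (k + m)) n (\<lambda>x. if x \<le> 2 ^ k then f x else 0) (gpow G r (k + m))"
proof (induction m)
  case 0
  have xk: "gpow G r k \<in> gobj G (2 ^ k)" using gpow_in[OF gr fdl_in[OF gr fdl]] .
  show ?case using act_cong[OF gr f _ xk, of "\<lambda>x. if x \<le> 2 ^ k then f x else 0"] by simp
next
  case (Suc m)
  let ?h = "\<lambda>x. if x \<le> 2 ^ k then f x else (0::nat)"
  have ph: "pmap (2 ^ (k + m)) n ?h" using f by (auto simp: pmap_def)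
  have "gact G (2 ^ (k + m)) n ?h (gpow G r (k + m))
     = gact G (2 ^ Suc (k + m)) n (\<lambda>x. if x \<le> 2 ^ (k + m) then ?h x else 0) (gpow G r (Suc (k + m)))"
    by (rule raise[OF gr fdl_in[OF gr fdl] fdl_p22[OF gr fdl] ph])
  moreover have "(\<lambda>x. if x \<le> 2 ^ (k + m) then ?h x else 0) = ?h"
  proof
    fix x
    have le: "(2::nat) ^ k \<le> 2 ^ (k + m)" by (simp add: power_increasing)
    show "(if x \<le> 2 ^ (k + m) then ?h x else 0) = ?h x"
    proof (cases "x \<le> 2 ^ k")
      case True
      then have "x \<le> 2 ^ (k + m)" using le by linarith
      then show ?thesis by simp
    next
      case False then show ?thesis by simp
    qed
  qed
  ultimately show ?case using Suc by simp
qed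

end

lemma WD:
  assumes gr: "is_gamma_ring G" and fdl: "formal_difference_law G r"
    and f: "pmap (2 ^ k) n f" and g: "pmap (2 ^ l) n g"
    and hz: "gact HZ (2 ^ k) n f (sg k) = gact HZ (2 ^ l) n g (sg l)"
  shows "gact G (2 ^ k) n f (gpow G r k) = gact G (2 ^ l) n g (gpow G r l)"
proof -
  have main: "gact G (2 ^ k) n f (gpow G r k) = gact G (2 ^ l) n g (gpow G r l)"
    if f: "pmap (2 ^ k) n f" and g: "pmap (2 ^ l) n g"
    and hz: "gact HZ (2 ^ k) n f (sg k) = gact HZ (2 ^ l) n g (sg l)" and kl: "k \<le> l"
    for k l f g
  proof -
    obtain m where l: "l = k + m" using kl le_Suc_ex by blast
    let ?f' = "\<lambda>x. if x \<le> 2 ^ k then f x else 0"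
    have pf': "pmap (2 ^ l) n ?f'" using f by (auto simp: pmap_def)
    have "gact HZ (2 ^ k) n f (sg k) = gact HZ (2 ^ l) n ?f' (sg l)"
      using raise_iter[OF HZ_gamma fdl_HZ f, of m] l by (simp add: gpow_HZ)
    then have "gact G (2 ^ l) n ?f' (gpow G r l) = gact G (2 ^ l) n g (gpow G r l)"
      using WD1[OF gr fdl pf' g] hz by simp
    moreover have "gact G (2 ^ k) n f (gpow G r k) = gact G (2 ^ l) n ?f' (gpow G r l)"
      using raise_iter[OF gr fdl f, of m] l by simp
    ultimately show ?thesis by simp
  qed
  show ?thesis
  proof (cases "k \<le> l")
    case True then show ?thesis using main f g hz by blast
  next
    case False then show ?thesis using main[OF g f hz[symmetric]] by simp
  qed
qed

lemma sg_Suc_hi: "1 \<le> i \<Longrightarrow> i \<le> 2 ^ k \<Longrightarrow> sg (Suc k) (2 ^ k + i) = - sg k i"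
proof -
  assume i: "1 \<le> i" "i \<le> 2 ^ k"
  have "bitcount (2 ^ k + i - 1) = Suc (bitcount (i - 1))"
    using bitcount_pow_add[of "i - 1" k] i by simp
  then show ?thesis using i by (simp add: sg_def)
qed

lemma sg_Suc_lo: "i \<le> 2 ^ k \<Longrightarrow> sg (Suc k) i = sg k i"
  by (simp add: sg_def)

lemma HZ_add_point:
  assumes f0: "pmap N n f0" and z: "z \<in> {1..N}" "f0 z = 0" and t: "t \<in> {1..n}"
  shows "gact HZ N n (f0(z := t)) v = (\<lambda>s. gact HZ N n f0 v s + (if s = t then v z else 0))"
proof
  fix s
  show "gact HZ N n (f0(z := t)) v s = gact HZ N n f0 v s + (if s = t then v z else 0)"
  proof (cases "s = 0 \<or> n < s")
    case True then show ?thesis using t by (auto simp: HZ_simps)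
  next
    case False
    show ?thesis
    proof (cases "s = t")
      case True
      have "{x\<in>{1..N}. (f0(z := t)) x = s} = insert z {x\<in>{1..N}. f0 x = s}"
        using z True by auto
      moreover have "z \<notin> {x\<in>{1..N}. f0 x = s}" using z False by auto
      ultimately show ?thesis using False True by (simp add: HZ_simps)
    next
      case F2: False
      have "{x\<in>{1..N}. (f0(z := t)) x = s} = {x\<in>{1..N}. f0 x = s}"
        using z F2 False by auto
      then show ?thesis using False F2 by (simp add: HZ_simps)
    qed
  qed
qed

lemma pmap_smash:
  assumes f: "pmap n n' f" and g: "pmap m m' g"
  shows "pmap (n * m) (n' * m') (smash_map n n' f g)"
  unfolding pmap_def
proof (intro conjI allI impI)
  show "smash_map n n' f g 0 = 0" by (simp add: smash_map_def)
  fix k assume k: "k \<le> n * m"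
  show "smash_map n n' f g k \<le> n' * m'"
  proof (cases "k = 0")
    case True then show ?thesis by (simp add: smash_map_def)
  next
    case False
    then have n0: "0 < n" using k by (cases n) auto
    define i where "i = (k - 1) mod n + 1"
    define j where "j = (k - 1) div n + 1"
    have "i \<le> n" using n0 by (simp add: i_def Suc_leI)
    then have fi: "f i \<le> n'" using f by (simp add: pmap_def)
    have "k - 1 < m * n" using k False by (simp add: mult.commute)
    then have "(k - 1) div n < m" by (rule less_mult_imp_div_less)
    then have "j \<le> m" by (simp add: j_def)
    then have gj: "g j \<le> m'" using g by (simp add: pmap_def)
    have "smash_map n n' f g k = (if f i = 0 \<or> g j = 0 then 0 else (g j - 1) * n' + f i)"
      using False unfolding smash_map_def i_def j_def Let_def by simp
    moreover have "g j \<noteq> 0 \<Longrightarrow> (g j - 1) * n' + f i \<le> n' * m'"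
    proof -
      assume "g j \<noteq> 0"
      then have "(g j - 1) * n' + f i \<le> (g j - 1) * n' + n'" using fi by simp
      also have "\<dots> = g j * n'" using \<open>g j \<noteq> 0\<close> by (cases "g j") auto
      also have "\<dots> \<le> m' * n'" using gj by simp
      finally show ?thesis by (simp add: mult.commute)
    qed
    ultimately show ?thesis by auto
  qed
qed

lemma s_map_pmap_gen: "1 \<le> i \<Longrightarrow> i < j \<Longrightarrow> j \<le> N \<Longrightarrow> 1 \<le> l \<Longrightarrow> l \<le> N - 1
   \<Longrightarrow> pmap N (N - 1) (s_map N i j l)"
  unfolding pmap_def s_map_def Let_def by auto

lemma sg_in_gobj: "sg k \<in> gobj HZ (2 ^ k)"
  by (simp add: HZ_simps sg_def)

lemma repr:
  "a \<in> gobj HZ n \<Longrightarrow> \<exists>k f. 1 \<le> k \<and> pmap (2 ^ k) n f \<and> a = gact HZ (2 ^ k) n f (sg k)"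
proof (induction "\<Sum>t\<in>{1..n}. nat \<bar>a t\<bar>" arbitrary: a rule: less_induct)
  case less
  note a = less.prems
  show ?case
  proof (cases "\<exists>t\<in>{1..n}. a t \<noteq> 0")
    case False
    have a0: "a = (\<lambda>_. 0)"
    proof
      fix s show "a s = 0"
      proof (cases "s = 0 \<or> n < s")
        case True then show ?thesis using a by (auto simp: HZ_simps)
      next
        case F: False then show ?thesis using False by auto
      qed
    qed
    have "gact HZ (2 ^ 1) n (\<lambda>_. 0) (sg 1) = (\<lambda>_. 0)" by (auto simp: HZ_simps)
    moreover have "pmap (2 ^ 1) n (\<lambda>_. 0)" by (simp add: pmap_def)
    ultimately show ?thesis using a0 by (metis order_refl)
  next
    case True
    then obtain t where t: "t \<in> {1..n}" "a t \<noteq> 0" by blast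
    define e where "e = sgn (a t)"
    have e: "e = 1 \<or> e = -1" using t by (auto simp: e_def sgn_if)
    define a' where "a' = a(t := a t - e)"
    have a': "a' \<in> gobj HZ n" using a t by (auto simp: HZ_simps a'_def)
    have lt: "(\<Sum>s\<in>{1..n}. nat \<bar>a' s\<bar>) < (\<Sum>s\<in>{1..n}. nat \<bar>a s\<bar>)"
    proof (rule sum_strict_mono_ex1)
      show "\<forall>s\<in>{1..n}. nat \<bar>a' s\<bar> \<le> nat \<bar>a s\<bar>"
        using t by (auto simp: a'_def e_def sgn_if)
      show "\<exists>s\<in>{1..n}. nat \<bar>a' s\<bar> < nat \<bar>a s\<bar>"
        using t by (intro bexI[of _ t]) (auto simp: a'_def e_def sgn_if)
    qed simp
    obtain k f where kf: "1 \<le> k" "pmap (2 ^ k) n f" "a' = gact HZ (2 ^ k) n f (sg k)"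
      using less.hyps[OF lt a'] by blast
    define f' where "f' = (\<lambda>x. if x \<le> 2 ^ k then f x else 0)"
    have pf': "pmap (2 ^ Suc k) n f'" using kf by (auto simp: pmap_def f'_def)
    have a'2: "a' = gact HZ (2 ^ Suc k) n f' (sg (Suc k))"
      using raise_iter[OF HZ_gamma fdl_HZ kf(2), of 1] kf(3) unfolding gpow_HZ f'_def by simp
    define z where "z = (if e = 1 then 2 ^ k + 2 else 2 ^ k + 1 :: nat)"
    have k2: "(2::nat) \<le> 2 ^ k" using kf(1)
      by (metis power_increasing power_one_right one_le_numeral)
    have z: "z \<in> {1..2 ^ Suc k}" using k2 by (auto simp: z_def)
    have fz: "f' z = 0" by (simp add: z_def f'_def)
    have sz: "sg (Suc k) z = e"
    proof (cases "e = 1")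
      case True
      then show ?thesis using sg_Suc_hi[of 2 k] sg_2[OF kf(1)] k2 by (simp add: z_def)
    next
      case False
      then show ?thesis using sg_Suc_hi[of 1 k] sg_1 e by (simp add: z_def)
    qed
    have pg: "pmap (2 ^ Suc k) n (f'(z := t))" using pf' t z unfolding pmap_def by auto
    have "gact HZ (2 ^ Suc k) n (f'(z := t)) (sg (Suc k))
        = (\<lambda>s. a' s + (if s = t then e else 0))"
      using HZ_add_point[OF pf' z fz t(1), of "sg (Suc k)"] a'2 sz by (simp cong: if_cong)
    also have "\<dots> = a" by (auto simp: a'_def)
    finally show ?thesis using pg by (metis le_SucI kf(1))
  qed
qed

definition Phi :: "'a gamma_ring \<Rightarrow> 'a \<Rightarrow> nat \<Rightarrow> (nat \<Rightarrow> int) \<Rightarrow> 'a" where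
  "Phi R r n a = (if a \<in> gobj HZ n then
      (SOME y. \<exists>k f. pmap (2 ^ k) n f \<and> a = gact HZ (2 ^ k) n f (sg k) \<and> y = gact R (2 ^ k) n f (gpow R r k))
     else undefined)"

lemma Phi_eq:
  assumes gr: "is_gamma_ring R" and fdl: "formal_difference_law R r"
    and f: "pmap (2 ^ k) n f" and a: "a = gact HZ (2 ^ k) n f (sg k)"
  shows "Phi R r n a = gact R (2 ^ k) n f (gpow R r k)"
proof -
  have ain: "a \<in> gobj HZ n" using a act_in[OF HZ_gamma f sg_in_gobj] by simp
  have ex: "\<exists>y. \<exists>k f. pmap (2 ^ k) n f \<and> a = gact HZ (2 ^ k) n f (sg k) \<and> y = gact R (2 ^ k) n f (gpow R r k)"
    using f a by blast
  obtain k' f' where kf': "pmap (2 ^ k') n f'" "a = gact HZ (2 ^ k') n f' (sg k')"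
    "Phi R r n a = gact R (2 ^ k') n f' (gpow R r k')"
    using someI_ex[OF ex] ain unfolding Phi_def by auto
  then show ?thesis using WD[OF gr fdl kf'(1) f] a by simp
qed

context
  fixes R :: "'a gamma_ring" and r
  assumes gr: "is_gamma_ring R" and fdl: "formal_difference_law R r"
begin

lemma Phi_mult_maps: "Phi R r \<in> mult_maps HZ R"
  unfolding mult_maps_def
proof (intro CollectI conjI allI impI)
  have rin: "r \<in> gobj R 2" using fdl_in[OF gr fdl] .
  fix n a
  assume a: "a \<in> gobj HZ n"
  then obtain k f where kf: "pmap (2 ^ k) n f" "a = gact HZ (2 ^ k) n f (sg k)"
    using repr by blast
  show "Phi R r n a \<in> gobj R n"
    using Phi_eq[OF gr fdl kf] act_in[OF gr kf(1) gpow_in[OF gr rin]] by simp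
next
  fix n a assume "a \<notin> gobj HZ n"
  then show "Phi R r n a = undefined" by (simp add: Phi_def)
next
  have rin: "r \<in> gobj R 2" using fdl_in[OF gr fdl] .
  fix n
  have c: "pmap (2 ^ 0) n (\<lambda>_. 0)" by (simp add: pmap_def)
  have "gbp HZ n = gact HZ (2 ^ 0) n (\<lambda>_. 0) (sg 0)" by (auto simp: HZ_simps)
  then have "Phi R r n (gbp HZ n) = gact R 1 n (\<lambda>_. 0) (gunit R)"
    using Phi_eq[OF gr fdl c] by simp
  also have "\<dots> = gact R 0 n (\<lambda>_. 0) (gact R 1 0 (\<lambda>_. 0) (gunit R))"
    using act_comp[OF gr _ _ unit_in[OF gr], of 0 "\<lambda>_. 0" n "\<lambda>_. 0"] by (simp add: pmap_def o_def)
  also have "\<dots> = gbp R n"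
  proof -
    have "gact R 1 0 (\<lambda>_. 0) (gunit R) \<in> gobj R 0"
      using act_in[OF gr _ unit_in[OF gr]] by (simp add: pmap_def)
    then have "gact R 1 0 (\<lambda>_. 0) (gunit R) = gbp R 0" using obj0[OF gr] by simp
    then show ?thesis using act_bp[OF gr] by (simp add: pmap_def)
  qed
  finally show "Phi R r n (gbp HZ n) = gbp R n" .
next
  have rin: "r \<in> gobj R 2" using fdl_in[OF gr fdl] .
  fix n m g a assume h: "pmap n m g \<and> a \<in> gobj HZ n"
  then obtain k f where kf: "pmap (2 ^ k) n f" "a = gact HZ (2 ^ k) n f (sg k)"
    using repr by blast
  have gf: "pmap (2 ^ k) m (g \<circ> f)" using pmap_comp[OF gr kf(1)] h by simp
  have "gact HZ n m g a = gact HZ (2 ^ k) m (g \<circ> f) (sg k)" using HZ_comp[OF kf(1)] h kf(2) by simp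
  then have "Phi R r m (gact HZ n m g a) = gact R (2 ^ k) m (g \<circ> f) (gpow R r k)"
    using Phi_eq[OF gr fdl gf] by simp
  also have "\<dots> = gact R n m g (gact R (2 ^ k) n f (gpow R r k))"
    using act_comp[OF gr kf(1) _ gpow_in[OF gr rin]] h by simp
  also have "\<dots> = gact R n m g (Phi R r n a)" using Phi_eq[OF gr fdl kf] by simp
  finally show "Phi R r m (gact HZ n m g a) = gact R n m g (Phi R r n a)" .
next
  have pid: "pmap (2 ^ 0) 1 (\<lambda>i. i)" by (simp add: pmap_def)
  have "gunit HZ = gact HZ (2 ^ 0) 1 (\<lambda>i. i) (sg 0)"
    using act_id[OF HZ_gamma sg_in_gobj[of 0]] gpow_HZ[of 0] by simp
  then have "Phi R r 1 (gunit HZ) = gact R 1 1 (\<lambda>i. i) (gunit R)"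
    using Phi_eq[OF gr fdl pid] by simp
  then show "Phi R r 1 (gunit HZ) = gunit R" using act_id[OF gr unit_in[OF gr]] by simp
next
  have rin: "r \<in> gobj R 2" using fdl_in[OF gr fdl] .
  fix n m a b assume h: "a \<in> gobj HZ n \<and> b \<in> gobj HZ m"
  then obtain k f where kf: "pmap (2 ^ k) n f" "a = gact HZ (2 ^ k) n f (sg k)"
    using repr by blast
  obtain l g where lg: "pmap (2 ^ l) m g" "b = gact HZ (2 ^ l) m g (sg l)"
    using repr h by blast
  have ps: "pmap (2 ^ (k + l)) (n * m) (smash_map (2 ^ k) n f g)"
    using pmap_smash[OF kf(1) lg(1)] by (simp add: power_add)
  have "gmult HZ n m a b = gact HZ (2 ^ k * 2 ^ l) (n * m) (smash_map (2 ^ k) n f g)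
        (gmult HZ (2 ^ k) (2 ^ l) (sg k) (sg l))"
    using mult_nat[OF HZ_gamma kf(1) lg(1) sg_in_gobj sg_in_gobj] kf(2) lg(2) by simp
  also have "\<dots> = gact HZ (2 ^ (k + l)) (n * m) (smash_map (2 ^ k) n f g) (sg (k + l))"
    using gpow_add[OF HZ_gamma fdl_in[OF HZ_gamma fdl_HZ], of k l] unfolding gpow_HZ
    by (simp add: power_add)
  finally have "Phi R r (n * m) (gmult HZ n m a b)
      = gact R (2 ^ (k + l)) (n * m) (smash_map (2 ^ k) n f g) (gpow R r (k + l))"
    using Phi_eq[OF gr fdl ps] by simp
  also have "\<dots> = gact R (2 ^ k * 2 ^ l) (n * m) (smash_map (2 ^ k) n f g)
        (gmult R (2 ^ k) (2 ^ l) (gpow R r k) (gpow R r l))"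
    using gpow_add[OF gr rin, of k l] by (simp add: power_add)
  also have "\<dots> = gmult R n m (gact R (2 ^ k) n f (gpow R r k)) (gact R (2 ^ l) m g (gpow R r l))"
    using mult_nat[OF gr kf(1) lg(1) gpow_in[OF gr rin] gpow_in[OF gr rin]] by simp
  also have "\<dots> = gmult R n m (Phi R r n a) (Phi R r m b)"
    using Phi_eq[OF gr fdl kf] Phi_eq[OF gr fdl lg] by simp
  finally show "Phi R r (n * m) (gmult HZ n m a b) = gmult R n m (Phi R r n a) (Phi R r m b)" .
qed

lemma Phi_gpow: "Phi R r (2 ^ n) (gpow HZ pm1 n) = gpow R r n"
proof -
  have rin: "r \<in> gobj R 2" using fdl_in[OF gr fdl] .
  have pid: "pmap (2 ^ n) (2 ^ n) (\<lambda>i. i)" by (simp add: pmap_def)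
  have "gpow HZ pm1 n = gact HZ (2 ^ n) (2 ^ n) (\<lambda>i. i) (sg n)"
    using act_id[OF HZ_gamma sg_in_gobj[of n]] gpow_HZ[of n] by simp
  then have "Phi R r (2 ^ n) (gpow HZ pm1 n) = gact R (2 ^ n) (2 ^ n) (\<lambda>i. i) (gpow R r n)"
    using Phi_eq[OF gr fdl pid] by simp
  then show ?thesis using act_id[OF gr gpow_in[OF gr rin]] by simp
qed

lemma Phi_pm1: "Phi R r 2 pm1 = r"
  using Phi_gpow[of 1] gpow_1[OF HZ_gamma fdl_in[OF HZ_gamma fdl_HZ]] gpow_1[OF gr fdl_in[OF gr fdl]]
  by simp

end

lemma mmD:
  assumes "\<phi> \<in> mult_maps HZ R"
  shows mm_in: "\<And>n x. x \<in> gobj HZ n \<Longrightarrow> \<phi> n x \<in> gobj R n"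
    and mm_out: "\<And>n x. x \<notin> gobj HZ n \<Longrightarrow> \<phi> n x = undefined"
    and mm_bp: "\<And>n. \<phi> n (gbp HZ n) = gbp R n"
    and mm_nat: "\<And>n m f x. pmap n m f \<Longrightarrow> x \<in> gobj HZ n \<Longrightarrow> \<phi> m (gact HZ n m f x) = gact R n m f (\<phi> n x)"
    and mm_unit: "\<phi> 1 (gunit HZ) = gunit R"
    and mm_mult: "\<And>n m x y. x \<in> gobj HZ n \<Longrightarrow> y \<in> gobj HZ m
        \<Longrightarrow> \<phi> (n * m) (gmult HZ n m x y) = gmult R n m (\<phi> n x) (\<phi> m y)"
  using assms unfolding mult_maps_def by auto

lemma pm1_in: "pm1 \<in> gobj HZ 2" by (rule fdl_in[OF HZ_gamma fdl_HZ])

lemma mm_gpow: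
  assumes "\<phi> \<in> mult_maps HZ R"
  shows "\<phi> (2 ^ k) (gpow HZ pm1 k) = gpow R (\<phi> 2 pm1) k"
proof (induction k)
  case 0 then show ?case using mm_unit[OF assms] by simp
next
  case (Suc k)
  have "\<phi> (2 ^ Suc k) (gpow HZ pm1 (Suc k)) = \<phi> (2 ^ k * 2) (gmult HZ (2 ^ k) 2 (gpow HZ pm1 k) pm1)"
    by (simp add: mult.commute)
  also have "\<dots> = gmult R (2 ^ k) 2 (\<phi> (2 ^ k) (gpow HZ pm1 k)) (\<phi> 2 pm1)"
    using mm_mult[OF assms gpow_in[OF HZ_gamma pm1_in] pm1_in] .
  finally show ?case using Suc by simp
qed

lemma mm_determined:
  assumes p: "\<phi> \<in> mult_maps HZ R" and q: "\<psi> \<in> mult_maps HZ R" and e: "\<phi> 2 pm1 = \<psi> 2 pm1"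
  shows "\<phi> = \<psi>"
proof (intro ext)
  fix n a
  show "\<phi> n a = \<psi> n a"
  proof (cases "a \<in> gobj HZ n")
    case True
    then obtain k f where kf: "pmap (2 ^ k) n f" "a = gact HZ (2 ^ k) n f (sg k)"
      using repr by blast
    have a: "a = gact HZ (2 ^ k) n f (gpow HZ pm1 k)" using kf(2) gpow_HZ by simp
    have s: "gpow HZ pm1 k \<in> gobj HZ (2 ^ k)" using gpow_in[OF HZ_gamma pm1_in] .
    have "\<phi> n a = gact R (2 ^ k) n f (gpow R (\<phi> 2 pm1) k)"
      using mm_nat[OF p kf(1) s] mm_gpow[OF p] a by simp
    moreover have "\<psi> n a = gact R (2 ^ k) n f (gpow R (\<psi> 2 pm1) k)"
      using mm_nat[OF q kf(1) s] mm_gpow[OF q] a by simp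
    ultimately show ?thesis using e by simp
  next
    case False
    then show ?thesis using mm_out[OF p] mm_out[OF q] by simp
  qed
qed

lemma pmap_swap12: "pmap 2 2 swap12" by (simp add: pmap_def swap12_def)

lemma transport:
  assumes gr: "is_gamma_ring R" and p: "\<phi> \<in> mult_maps HZ R"
  shows "formal_difference_law R (\<phi> 2 pm1)"
proof -
  let ?r = "\<phi> 2 pm1"
  have H: "formal_difference_law HZ pm1" by (rule fdl_HZ)
  have p22: "pmap 2 1 (p_map 2 2)" by (simp add: pmap_def p_map_def)
  have p21: "pmap 2 1 (p_map 2 1)" by (auto simp: pmap_def p_map_def)
  have s121: "pmap 2 1 (s_map 2 1 2 1)" by (simp add: pmap_def s_map_def)
  have HH: "gact HZ 2 1 (p_map 2 2) pm1 = gunit HZ" "gact HZ 2 1 (s_map 2 1 2 1) pm1 = gbp HZ 1"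
      "gmult HZ 1 2 (gact HZ 2 1 (p_map 2 1) pm1) pm1 = gact HZ 2 2 swap12 pm1"
      "gmult HZ 2 1 pm1 (gact HZ 2 1 (p_map 2 1) pm1) = gact HZ 2 2 swap12 pm1"
    using H unfolding formal_difference_law_def by blast+
  have a1: "gact HZ 2 1 (p_map 2 1) pm1 \<in> gobj HZ 1" using act_in[OF HZ_gamma p21 pm1_in] .
  show ?thesis
    unfolding formal_difference_law_def
  proof (intro conjI allI impI)
    show "?r \<in> gobj R 2" using mm_in[OF p pm1_in] .
    show "gact R 2 1 (p_map 2 2) ?r = gunit R"
      using mm_nat[OF p p22 pm1_in] HH(1) mm_unit[OF p] by simp
    show "gact R 2 1 (s_map 2 1 2 1) ?r = gbp R 1"
      using mm_nat[OF p s121 pm1_in] HH(2) mm_bp[OF p] by simp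
    show "gmult R 1 2 (gact R 2 1 (p_map 2 1) ?r) ?r = gact R 2 2 swap12 ?r"
      using mm_mult[OF p a1 pm1_in] mm_nat[OF p p21 pm1_in] HH(3) mm_nat[OF p pmap_swap12 pm1_in]
      by simp
    show "gmult R 2 1 ?r (gact R 2 1 (p_map 2 1) ?r) = gact R 2 2 swap12 ?r"
      using mm_mult[OF p pm1_in a1] mm_nat[OF p p21 pm1_in] HH(4) mm_nat[OF p pmap_swap12 pm1_in]
      by simp
  next
    fix k :: nat and \<pi>
    assume k: "1 \<le> k" and h: "\<pi> permutes {1..2 ^ k} \<and> \<pi> ` Aplus k \<subseteq> Aplus k \<and> \<pi> ` Aminus k \<subseteq> Aminus k"
    have pp: "pmap (2 ^ k) (2 ^ k) \<pi>"
      unfolding pmap_def using h permutes_not_in[of \<pi> "{1..2 ^ k}"] permutes_in_image[of \<pi> "{1..2 ^ k}"]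
      by (metis atLeastAtMost_iff not_one_le_zero order.trans le_refl)
    have s: "gpow HZ pm1 k \<in> gobj HZ (2 ^ k)" using gpow_in[OF HZ_gamma pm1_in] .
    have "gact HZ (2 ^ k) (2 ^ k) \<pi> (gpow HZ pm1 k) = gpow HZ pm1 k"
      using fdl_cond3[OF HZ_gamma H k] h by blast
    then show "gact R (2 ^ k) (2 ^ k) \<pi> (gpow R ?r k) = gpow R ?r k"
      using mm_nat[OF p pp s] mm_gpow[OF p] by simp
  next
    fix k i j l :: nat
    assume k: "1 \<le> k" and h: "1 \<le> i \<and> i < j \<and> j \<le> 2 ^ k \<and>
        (i \<in> Aplus k \<and> j \<in> Aminus k \<or> i \<in> Aminus k \<and> j \<in> Aplus k) \<and>
        1 \<le> l \<and> l \<le> 2 ^ k - 1"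
    define N where "N = (2::nat) ^ k"
    have ij: "1 \<le> i" "i < j" "j \<le> N" "1 \<le> l" "l \<le> N - 1" using h N_def by auto
    have NN: "N - 1 - 1 = N - 2" by simp
    have ps: "pmap N (N - 1) (s_map N i j l)" using s_map_pmap_gen ij by blast
    have pj: "pmap N (N - 1) (p_map N j)" using p_map_pmap ij by simp
    have pi: "pmap (N - 1) (N - 2) (p_map (N - 1) i)" using p_map_pmap[of i "N - 1"] ij NN by simp
    have pd: "pmap (N - 2) (N - 1) (d_map (N - 1) l)" using d_map_pmap[of l "N - 1"] ij NN by simp
    have s: "gpow HZ pm1 k \<in> gobj HZ N" using gpow_in[OF HZ_gamma pm1_in] N_def by simp
    have s1: "gact HZ N (N - 1) (p_map N j) (gpow HZ pm1 k) \<in> gobj HZ (N - 1)"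
      using act_in[OF HZ_gamma pj s] .
    have s2: "gact HZ (N - 1) (N - 2) (p_map (N - 1) i) (gact HZ N (N - 1) (p_map N j) (gpow HZ pm1 k))
       \<in> gobj HZ (N - 2)" using act_in[OF HZ_gamma pi s1] .
    have c4: "gact HZ N (N - 1) (s_map N i j l) (gpow HZ pm1 k)
            = gact HZ (N - 2) (N - 1) (d_map (N - 1) l)
                (gact HZ (N - 1) (N - 2) (p_map (N - 1) i)
                  (gact HZ N (N - 1) (p_map N j) (gpow HZ pm1 k)))"
      using fdl_cond4[OF HZ_gamma H k, of i j l] h unfolding N_def by blast
    have "gact R N (N - 1) (s_map N i j l) (gpow R ?r k)
        = \<phi> (N - 1) (gact HZ N (N - 1) (s_map N i j l) (gpow HZ pm1 k))"
      using mm_nat[OF p ps s] mm_gpow[OF p, of k] N_def by simp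
    also have "\<dots> = gact R (N - 2) (N - 1) (d_map (N - 1) l)
                (gact R (N - 1) (N - 2) (p_map (N - 1) i)
                  (gact R N (N - 1) (p_map N j) (gpow R ?r k)))"
      using c4 mm_nat[OF p pd s2] mm_nat[OF p pi s1] mm_nat[OF p pj s] mm_gpow[OF p, of k] N_def
      by simp
    finally show "gact R (2 ^ k) (2 ^ k - 1) (s_map (2 ^ k) i j l) (gpow R ?r k)
            = gact R (2 ^ k - 2) (2 ^ k - 1) (d_map (2 ^ k - 1) l)
                (gact R (2 ^ k - 1) (2 ^ k - 2) (p_map (2 ^ k - 1) i)
                  (gact R (2 ^ k) (2 ^ k - 1) (p_map (2 ^ k) j) (gpow R ?r k)))"
      unfolding N_def .
  qed
qed

theorem mainTheorem6:
  fixes R :: "'a gamma_ring"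
  assumes "is_gamma_ring R"
  shows "(\<forall>\<phi>\<in>mult_maps HZ R. formal_difference_law R (\<phi> 2 pm1))
       \<and> bij_betw (\<lambda>\<phi>. \<phi> 2 pm1) (mult_maps HZ R) {r. formal_difference_law R r}
       \<and> (\<forall>r. formal_difference_law R r \<longrightarrow>
            (\<exists>!\<phi>. \<phi> \<in> mult_maps HZ R \<and> (\<forall>n. \<phi> (2 ^ n) (gpow HZ pm1 n) = gpow R r n)))"
proof (intro conjI ballI allI impI)
  note gr = assms
  show "\<And>\<phi>. \<phi> \<in> mult_maps HZ R \<Longrightarrow> formal_difference_law R (\<phi> 2 pm1)"
    using transport[OF gr] by blast
  show "bij_betw (\<lambda>\<phi>. \<phi> 2 pm1) (mult_maps HZ R) {r. formal_difference_law R r}"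
    unfolding bij_betw_def
  proof (intro conjI)
    show "inj_on (\<lambda>\<phi>. \<phi> 2 pm1) (mult_maps HZ R)"
      using mm_determined by (intro inj_onI) blast
    show "(\<lambda>\<phi>. \<phi> 2 pm1) ` mult_maps HZ R = {r. formal_difference_law R r}"
    proof
      show "(\<lambda>\<phi>. \<phi> 2 pm1) ` mult_maps HZ R \<subseteq> {r. formal_difference_law R r}"
        using transport[OF gr] by blast
      show "{r. formal_difference_law R r} \<subseteq> (\<lambda>\<phi>. \<phi> 2 pm1) ` mult_maps HZ R"
      proof
        fix r assume "r \<in> {r. formal_difference_law R r}"
        then have fr: "formal_difference_law R r" by simp
        show "r \<in> (\<lambda>\<phi>. \<phi> 2 pm1) ` mult_maps HZ R"
          using Phi_mult_maps[OF gr fr] Phi_pm1[OF gr fr] by (metis image_eqI)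
      qed
    qed
  qed
  fix r assume fr: "formal_difference_law R r"
  show "\<exists>!\<phi>. \<phi> \<in> mult_maps HZ R \<and> (\<forall>n. \<phi> (2 ^ n) (gpow HZ pm1 n) = gpow R r n)"
  proof (rule ex1I[of _ "Phi R r"])
    show "Phi R r \<in> mult_maps HZ R \<and> (\<forall>n. Phi R r (2 ^ n) (gpow HZ pm1 n) = gpow R r n)"
      using Phi_mult_maps[OF gr fr] Phi_gpow[OF gr fr] by blast
    fix \<psi> assume h: "\<psi> \<in> mult_maps HZ R \<and> (\<forall>n. \<psi> (2 ^ n) (gpow HZ pm1 n) = gpow R r n)"
    have "\<psi> 2 pm1 = r"
      using h gpow_1[OF HZ_gamma pm1_in] gpow_1[OF gr fdl_in[OF gr fr]] by (metis power_one_right)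
    then show "\<psi> = Phi R r"
      using mm_determined[of \<psi> R "Phi R r"] h Phi_mult_maps[OF gr fr] Phi_pm1[OF gr fr] by simp
  qed
qed

end
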